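(* Let $u$ be a sufficiently regular function and $H=(H^{\alpha\beta})$ a sufficiently regular symmetric 2-tensor field on $\mathcal{K}_{[s_0,s_1]}$. Let $I$ be a multi-index with values in $\{0,1,2\}$, $J$ a multi-index with values in $\{1,2\}$, $p=|I|+|J|$, $k=|J|$. Then, with a constant $C$ determined by $I,J$, $$\big|[\partial^IL^J,\underline{H}^{00}\partial_t\partial_t]u\big|\le C\!\!\!\sum_{|I_1|+|I_2|\le|I|,\ |J_1|+|J_2|\le|J|\atop |I_2|+|J_2|\ge1}\!\!\!|\partial^{I_2}L^{J_2}\underline{H}^{00}|\,|\partial_t\partial_t\partial^{I_1}L^{J_1}u|+C|\underline{H}^{00}|\sum_{0\le|J'|<|J|}|\partial_t\partial_t\partial^IL^{J'}u|$$ $$+Ct^{-1}\sum_{p_1+p_2\le p,\ p_1<p\atop k_1+k_2\le k}|\underline{H}^{00}|_{p_2,k_2}|\partial u|_{p_1+1,k_1+1}+Ct^{-1}|\underline{H}^{00}|\,|\partial u|_{p,k},$$ where $[\partial^IL^J,\underline{H}^{00}\partial_t\partial_t]u:=\partial^IL^J(\underline{H}^{00}\partial_t\partial_tu)-\underline{H}^{00}\partial_t\partial_t\partial^IL^Ju$.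
   Context: Coordinates $(t,x)=(x^0,x^1,x^2)$, $r=|x|$, $\partial_0=\partial_t$, summation over repeated indices. $\mathcal{K}_{[s_0,s_1]}=\{(t,x): t>r+1,\ s_0^2\le t^2-r^2\le s_1^2\}$. Boosts $L_a=x^a\partial_t+t\partial_a$; $\partial^I=\partial_{i_1}\cdots\partial_{i_m}$, $L^J=L_{j_1}\cdots L_{j_n}$. $\underline{H}^{00}:=H^{00}-2(x^a/t)H^{a0}+(x^ax^b/t^2)H^{ab}$. For a function $w$: $|w|_{p,k}:=\max|Z^Kw|$ over all operators $Z^K$ that are compositions, in any order, of $i$ partial derivatives $\partial_\alpha$ and $j$ boosts $L_a$ with $i+j\le p$, $j\le k$; $|\partial w|_{p,k}:=\max_\alpha|\partial_\alpha w|_{p,k}$. *)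

theory Defs
  imports "HOL-Analysis.Analysis"
begin

text \<open>Points of spacetime are vectors x :: real^3, with x$0 = t, x$1, x$2 spatial.\<close>

definition pd :: "3 \<Rightarrow> (real^3 \<Rightarrow> real) \<Rightarrow> real^3 \<Rightarrow> real" where
  "pd a w x = deriv (\<lambda>h. w (x + h *\<^sub>R axis a 1)) 0"

fun pds :: "3 list \<Rightarrow> (real^3 \<Rightarrow> real) \<Rightarrow> real^3 \<Rightarrow> real" where
  "pds [] w = w"
| "pds (a # as) w = pd a (pds as w)"

definition boost :: "3 \<Rightarrow> (real^3 \<Rightarrow> real) \<Rightarrow> real^3 \<Rightarrow> real" where
  "boost a w x = x$a * pd 0 w x + x$0 * pd a w x"

fun boosts :: "3 list \<Rightarrow> (real^3 \<Rightarrow> real) \<Rightarrow> real^3 \<Rightarrow> real" where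
  "boosts [] w = w"
| "boosts (a # as) w = boost a (boosts as w)"

definition smooth_on :: "(real^3) set \<Rightarrow> (real^3 \<Rightarrow> real) \<Rightarrow> bool" where
  "smooth_on U w \<longleftrightarrow> (\<forall>ds. pds ds w differentiable_on U)"

definition rad :: "real^3 \<Rightarrow> real" where
  "rad x = sqrt ((x$1)^2 + (x$2)^2)"

definition Kreg :: "real \<Rightarrow> real \<Rightarrow> (real^3) set" where
  "Kreg s0 s1 = {x. x$0 > rad x + 1 \<and> s0^2 \<le> (x$0)^2 - (rad x)^2 \<and> (x$0)^2 - (rad x)^2 \<le> s1^2}"

definition Hunder :: "(3 \<Rightarrow> 3 \<Rightarrow> real^3 \<Rightarrow> real) \<Rightarrow> real^3 \<Rightarrow> real" where
  "Hunder H x = H 0 0 x - 2 * (\<Sum>a\<in>{1,2}. (x$a / x$0) * H a 0 x)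
     + (\<Sum>a\<in>{1,2}. \<Sum>b\<in>{1,2}. (x$a * x$b / (x$0)^2) * H a b x)"

datatype zop = Dz "3" | Lz "3"

fun zapp :: "zop \<Rightarrow> (real^3 \<Rightarrow> real) \<Rightarrow> real^3 \<Rightarrow> real" where
  "zapp (Dz a) w = pd a w"
| "zapp (Lz a) w = boost a w"

fun applyZ :: "zop list \<Rightarrow> (real^3 \<Rightarrow> real) \<Rightarrow> real^3 \<Rightarrow> real" where
  "applyZ [] w = w"
| "applyZ (z # zs) w = zapp z (applyZ zs w)"

fun isL :: "zop \<Rightarrow> bool" where
  "isL (Dz _) = False"
| "isL (Lz _) = True"

definition Zops :: "zop set" where
  "Zops = {Dz 0, Dz 1, Dz 2, Lz 1, Lz 2}"

definition znorm :: "nat \<Rightarrow> nat \<Rightarrow> (real^3 \<Rightarrow> real) \<Rightarrow> real^3 \<Rightarrow> real" where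
  "znorm p k w x = Max {\<bar>applyZ zs w x\<bar> | zs. set zs \<subseteq> Zops \<and> length zs \<le> p
                          \<and> length (filter isL zs) \<le> k}"

definition dznorm :: "nat \<Rightarrow> nat \<Rightarrow> (real^3 \<Rightarrow> real) \<Rightarrow> real^3 \<Rightarrow> real" where
  "dznorm p k w x = Max {znorm p k (pd a w) x | a. a \<in> (UNIV :: 3 set)}"

end

theory Submission
  imports Defs
begin


lemma type3_cases: "(i::3) = 0 \<or> i = 1 \<or> i = 2"
  using exhaust_3[of i] by auto

lemma line_hasderiv:
  assumes "(f has_derivative f') (at (y + s *\<^sub>R v))"
  shows "((\<lambda>h. f (y + h *\<^sub>R v)) has_real_derivative f' v) (at s)"
proof -
  have l: "((\<lambda>h. y + h *\<^sub>R v) has_derivative (\<lambda>h. h *\<^sub>R v)) (at s)"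
    by (auto intro!: derivative_eq_intros)
  have "((\<lambda>h. f (y + h *\<^sub>R v)) has_derivative (\<lambda>h. f' (h *\<^sub>R v))) (at s)"
    using has_derivative_compose[OF l assms] by (simp add: o_def)
  moreover have "(\<lambda>h. f' (h *\<^sub>R v)) = (*) (f' v)"
    using has_derivative_linear[OF assms] by (auto simp: linear_scale)
  ultimately show ?thesis
    by (simp add: has_field_derivative_def)
qed

lemma pd_hasderiv:
  assumes "(f has_derivative f') (at x)"
  shows "pd a f x = f' (axis a 1)"
proof -
  have "((\<lambda>h. f (x + h *\<^sub>R axis a 1)) has_real_derivative f' (axis a 1)) (at 0)"
    by (rule line_hasderiv) (simp add: assms)
  thus ?thesis unfolding pd_def by (rule DERIV_imp_deriv)
qed

lemma pd_line_deriv: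
  assumes "f differentiable (at (y + s *\<^sub>R axis a 1))"
  shows "((\<lambda>h. f (y + h *\<^sub>R axis a 1)) has_real_derivative pd a f (y + s *\<^sub>R axis a 1)) (at s)"
proof -
  obtain f' where f': "(f has_derivative f') (at (y + s *\<^sub>R axis a 1))"
    using assms unfolding differentiable_def by blast
  show ?thesis using line_hasderiv[OF f'] pd_hasderiv[OF f'] by simp
qed

definition eqv :: "(real^3) set \<Rightarrow> (real^3 \<Rightarrow> real) \<Rightarrow> (real^3 \<Rightarrow> real) \<Rightarrow> bool" where
  "eqv V f g \<longleftrightarrow> (\<forall>y\<in>V. f y = g y)"

lemma pd_cong:
  assumes "open V" "eqv V f g"
  shows "eqv V (pd a f) (pd a g)"
  unfolding eqv_def
proof
  fix x assume x: "x \<in> V"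
  obtain e where e: "e > 0" "ball x e \<subseteq> V" using assms(1) x open_contains_ball by blast
  have "eventually (\<lambda>h. h \<in> ball 0 e) (nhds (0::real))"
    using e(1) by (intro eventually_nhds_in_open) auto
  hence ev: "eventually (\<lambda>h. f (x + h *\<^sub>R axis a 1) = g (x + h *\<^sub>R axis a 1)) (nhds 0)"
  proof (rule eventually_mono)
    fix h :: real assume "h \<in> ball 0 e"
    hence "x + h *\<^sub>R axis a 1 \<in> ball x e" by (simp add: dist_norm)
    thus "f (x + h *\<^sub>R axis a 1) = g (x + h *\<^sub>R axis a 1)" using e(2) assms(2) unfolding eqv_def by blast
  qed
  show "pd a f x = pd a g x" unfolding pd_def by (rule deriv_cong_ev[OF ev refl])
qed

lemma eqv_refl[simp]: "eqv V f f" by (simp add: eqv_def)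
lemma eqv_sym: "eqv V f g \<Longrightarrow> eqv V g f" by (simp add: eqv_def)
lemma eqv_trans: "eqv V f g \<Longrightarrow> eqv V g h \<Longrightarrow> eqv V f h" by (simp add: eqv_def)

lemma pds_append: "pds (xs @ ys) f = pds xs (pds ys f)"
  by (induction xs) auto

definition smn :: "(real^3) set \<Rightarrow> nat \<Rightarrow> (real^3 \<Rightarrow> real) \<Rightarrow> bool" where
  "smn V n f \<longleftrightarrow> (\<forall>ds. length ds \<le> n \<longrightarrow> pds ds f differentiable_on V)"

lemma smn_0: "smn V 0 f \<longleftrightarrow> f differentiable_on V"
  unfolding smn_def by auto

lemma smn_Suc: "smn V (Suc n) f \<longleftrightarrow> f differentiable_on V \<and> (\<forall>a. smn V n (pd a f))"
proof
  assume h: "smn V (Suc n) f"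
  have "f differentiable_on V" using h[unfolded smn_def, rule_format, of "[]"] by simp
  moreover have "smn V n (pd a f)" for a
    unfolding smn_def
  proof (intro allI impI)
    fix ds :: "3 list" assume "length ds \<le> n"
    thus "pds ds (pd a f) differentiable_on V"
      using h[unfolded smn_def, rule_format, of "ds @ [a]"] by (simp add: pds_append)
  qed
  ultimately show "f differentiable_on V \<and> (\<forall>a. smn V n (pd a f))" by blast
next
  assume h: "f differentiable_on V \<and> (\<forall>a. smn V n (pd a f))"
  show "smn V (Suc n) f" unfolding smn_def
  proof (intro allI impI)
    fix ds :: "3 list" assume l: "length ds \<le> Suc n"
    show "pds ds f differentiable_on V"
    proof (cases ds rule: rev_exhaust)
      case Nil thus ?thesis using h by simp
    next
      case (snoc ys a)
      thus ?thesis using h l unfolding smn_def by (auto simp: pds_append)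
    qed
  qed
qed

lemma smooth_smn: "smooth_on V f \<longleftrightarrow> (\<forall>n. smn V n f)"
  unfolding smooth_on_def smn_def by (metis order_refl)

lemma smn_mono: "smn V n f \<Longrightarrow> m \<le> n \<Longrightarrow> smn V m f"
  unfolding smn_def by auto

lemma eqv_diff_on:
  assumes "open V" "eqv V f g" "f differentiable_on V"
  shows "g differentiable_on V"
  unfolding differentiable_on_eq_differentiable_at[OF assms(1)]
proof
  fix x assume x: "x \<in> V"
  obtain f' where "(f has_derivative f') (at x)"
    using assms(3) x unfolding differentiable_on_eq_differentiable_at[OF assms(1)] differentiable_def by blast
  hence "(g has_derivative f') (at x)"
    by (rule has_derivative_transform_within_open[OF _ assms(1) x]) (use assms(2) in \<open>auto simp: eqv_def\<close>)
  thus "g differentiable (at x)" unfolding differentiable_def by blast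
qed

lemma smn_cong:
  assumes "open V" "eqv V f g" "smn V n f"
  shows "smn V n g"
  using assms(2,3)
proof (induction n arbitrary: f g)
  case 0 thus ?case using eqv_diff_on[OF assms(1)] by (simp add: smn_0)
next
  case (Suc n)
  have "g differentiable_on V"
    using Suc.prems eqv_diff_on[OF assms(1)] by (simp add: smn_Suc)
  moreover have "smn V n (pd a g)" for a
    using Suc.IH[OF pd_cong[OF assms(1) Suc.prems(1)]] Suc.prems(2) by (simp add: smn_Suc)
  ultimately show ?case by (simp add: smn_Suc)
qed

lemma smn_diff_at: "open V \<Longrightarrow> smn V n f \<Longrightarrow> x \<in> V \<Longrightarrow> f differentiable (at x)"
  unfolding smn_def using differentiable_on_eq_differentiable_at
  by (metis pds.simps(1) le0 list.size(3))

lemma pd_add_at: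
  assumes "f differentiable (at x)" "g differentiable (at x)"
  shows "pd a (\<lambda>y. f y + g y) x = pd a f x + pd a g x"
proof -
  obtain f' g' where "(f has_derivative f') (at x)" "(g has_derivative g') (at x)"
    using assms unfolding differentiable_def by blast
  hence "((\<lambda>y. f y + g y) has_derivative (\<lambda>h. f' h + g' h)) (at x)"
    by (rule has_derivative_add)
  from pd_hasderiv[OF this] pd_hasderiv[OF \<open>(f has_derivative f') (at x)\<close>]
    pd_hasderiv[OF \<open>(g has_derivative g') (at x)\<close>] show ?thesis by simp
qed

lemma pd_mult_at:
  assumes "f differentiable (at x)" "g differentiable (at x)"
  shows "pd a (\<lambda>y. f y * g y) x = pd a f x * g x + f x * pd a g x"
proof -
  obtain f' g' where f': "(f has_derivative f') (at x)" and g': "(g has_derivative g') (at x)"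
    using assms unfolding differentiable_def by blast
  have "((\<lambda>y. f y * g y) has_derivative (\<lambda>h. f x * g' h + f' h * g x)) (at x)"
    by (rule has_derivative_mult[OF f' g'])
  from pd_hasderiv[OF this] pd_hasderiv[OF f'] pd_hasderiv[OF g'] show ?thesis by simp
qed

lemma pd_const: "pd a (\<lambda>y. c) x = 0"
  using pd_hasderiv[OF has_derivative_const[of c]] by simp

lemma pd_coord: "pd a (\<lambda>y. y $ i) x = (if i = a then 1 else 0)"
proof -
  have "((\<lambda>y. y $ i) has_derivative (\<lambda>h. h $ i)) (at x)"
    by (rule bounded_linear_imp_has_derivative) (simp add: bounded_linear_vec_nth)
  from pd_hasderiv[OF this] show ?thesis by (simp add: axis_def)
qed



lemma smn_add:
  assumes "open V" shows "smn V n f \<Longrightarrow> smn V n g \<Longrightarrow> smn V n (\<lambda>y. f y + g y)"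
proof (induction n arbitrary: f g)
  case 0 thus ?case by (simp add: smn_0)
next
  case (Suc n)
  have "smn V n (pd a (\<lambda>y. f y + g y))" for a
  proof -
    have "eqv V (\<lambda>y. pd a f y + pd a g y) (pd a (\<lambda>y. f y + g y))"
      unfolding eqv_def using pd_add_at smn_diff_at[OF assms] Suc.prems by metis
    moreover have "smn V n (\<lambda>y. pd a f y + pd a g y)"
      using Suc.IH Suc.prems by (simp add: smn_Suc)
    ultimately show ?thesis using smn_cong[OF assms] by blast
  qed
  thus ?case using Suc.prems by (simp add: smn_Suc)
qed

lemma smn_mult:
  assumes "open V" shows "smn V n f \<Longrightarrow> smn V n g \<Longrightarrow> smn V n (\<lambda>y. f y * g y)"
proof (induction n arbitrary: f g)
  case 0 thus ?case by (simp add: smn_0)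
next
  case (Suc n)
  have "smn V n (pd a (\<lambda>y. f y * g y))" for a
  proof -
    have "eqv V (\<lambda>y. pd a f y * g y + f y * pd a g y) (pd a (\<lambda>y. f y * g y))"
      unfolding eqv_def using pd_mult_at smn_diff_at[OF assms] Suc.prems by metis
    moreover have "smn V n (\<lambda>y. pd a f y * g y + f y * pd a g y)"
    proof (rule smn_add[OF assms])
      show "smn V n (\<lambda>y. pd a f y * g y)"
        using Suc.IH Suc.prems smn_mono[of V "Suc n" g n] by (simp add: smn_Suc)
      show "smn V n (\<lambda>y. f y * pd a g y)"
        using Suc.IH Suc.prems smn_mono[of V "Suc n" f n] by (simp add: smn_Suc)
    qed
    ultimately show ?thesis using smn_cong[OF assms] by blast
  qed
  thus ?case using Suc.prems by (simp add: smn_Suc)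
qed

lemma pd_const_fun: "pd a (\<lambda>y. c) = (\<lambda>y. 0)"
  by (rule ext) (rule pd_const)

lemma smn_const: "smn V n (\<lambda>y. c)"
proof (induction n arbitrary: c)
  case 0 thus ?case by (simp add: smn_0)
next
  case (Suc n) thus ?case by (simp add: smn_Suc pd_const_fun)
qed

lemma smn_coord: "smn V n (\<lambda>y. y $ i)"
proof (cases n)
  case 0 thus ?thesis by (simp add: smn_0 bounded_linear_imp_differentiable_on bounded_linear_vec_nth)
next
  case (Suc m)
  have "pd a (\<lambda>y. y $ i) = (\<lambda>y. if i = a then 1 else 0)" for a
    by (rule ext) (simp add: pd_coord)
  thus ?thesis using Suc by (simp add: smn_Suc smn_const bounded_linear_imp_differentiable_on bounded_linear_vec_nth)
qed

lemma inv0_hasderiv: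
  fixes y :: "real^3" and c :: real
  assumes "y $ 0 \<noteq> 0"
  shows "((\<lambda>z. c * inverse (z $ 0) ^ k) has_derivative
     (\<lambda>h. c * (of_nat k * (- (inverse (y $ 0) * h $ 0 * inverse (y $ 0))) * inverse (y $ 0) ^ (k - 1)))) (at y)"
proof -
  have d0: "((\<lambda>z. z $ 0) has_derivative (\<lambda>h. h $ 0)) (at y)"
    by (rule bounded_linear_imp_has_derivative) (simp add: bounded_linear_vec_nth)
  have "((\<lambda>z. inverse (z $ 0)) has_derivative (\<lambda>h. - (inverse (y $ 0) * h $ 0 * inverse (y $ 0)))) (at y)"
    using Deriv.has_derivative_inverse[of "\<lambda>z. z $ 0" y, OF _ d0] assms by simp
  from has_derivative_mult_right[OF has_derivative_power[OF this, of k], of c] show ?thesis .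
qed

lemma smn_inv0:
  assumes "open V" "\<forall>y\<in>V. y $ 0 > 0"
  shows "smn V n (\<lambda>y. c * inverse (y $ 0) ^ k)"
  using assms(2)
proof (induction n arbitrary: c k)
  case 0
  show ?case unfolding smn_0 differentiable_on_eq_differentiable_at[OF assms(1)]
    using inv0_hasderiv 0 unfolding differentiable_def by (metis less_irrefl)
next
  case (Suc n)
  have dif: "(\<lambda>y. c * inverse (y $ 0) ^ k) differentiable_on V"
    unfolding differentiable_on_eq_differentiable_at[OF assms(1)]
    using inv0_hasderiv Suc.prems unfolding differentiable_def by (metis less_irrefl)
  have "smn V n (pd a (\<lambda>y. c * inverse (y $ 0) ^ k))" for a
  proof (cases "a = 0")
    case True
    have "eqv V (\<lambda>y. (- c * real k) * inverse (y $ 0) ^ (k + 1)) (pd a (\<lambda>y. c * inverse (y $ 0) ^ k))"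
      unfolding eqv_def
    proof
      fix y assume "y \<in> V"
      hence ne: "y $ 0 \<noteq> 0" using Suc.prems by fastforce
      show "(- c * real k) * inverse (y $ 0) ^ (k + 1) = pd a (\<lambda>y. c * inverse (y $ 0) ^ k) y"
        unfolding pd_hasderiv[OF inv0_hasderiv[OF ne]] using True
        by (cases k) (simp_all add: axis_def field_simps, simp add: minus_divide_left algebra_simps)
    qed
    thus ?thesis using Suc.IH[OF Suc.prems] smn_cong[OF assms(1)] by blast
  next
    case False
    have "eqv V (\<lambda>y. 0 * inverse (y $ 0) ^ 0) (pd a (\<lambda>y. c * inverse (y $ 0) ^ k))"
      unfolding eqv_def
    proof
      fix y assume "y \<in> V"
      hence ne: "y $ 0 \<noteq> 0" using Suc.prems by fastforce
      show "0 * inverse (y $ 0) ^ 0 = pd a (\<lambda>y. c * inverse (y $ 0) ^ k) y"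
        unfolding pd_hasderiv[OF inv0_hasderiv[OF ne]] using False
        by (auto simp: axis_def)
    qed
    thus ?thesis using Suc.IH[OF Suc.prems] smn_cong[OF assms(1)] by blast
  qed
  thus ?case using dif by (simp add: smn_Suc)
qed



lemma dist_two_axes:
  fixes x :: "real^3"
  shows "dist (x + u *\<^sub>R axis a 1 + w *\<^sub>R axis b 1) x \<le> \<bar>u\<bar> + \<bar>w\<bar>"
proof -
  have "dist (x + u *\<^sub>R axis a 1 + w *\<^sub>R axis b 1) x = norm (u *\<^sub>R axis a (1::real) + w *\<^sub>R axis b 1)"
    by (simp add: dist_norm)
  also have "\<dots> \<le> norm (u *\<^sub>R axis a (1::real)) + norm (w *\<^sub>R axis b (1::real))"
    by (rule norm_triangle_ineq)
  also have "\<dots> = \<bar>u\<bar> + \<bar>w\<bar>" by simp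
  finally show ?thesis .
qed

lemma mvt2d:
  fixes x :: "real^3" and f :: "real^3 \<Rightarrow> real"
  assumes h: "h > 0"
    and df: "\<And>y. dist y x \<le> 2*h \<Longrightarrow> f differentiable (at y)"
    and dg: "\<And>y. dist y x \<le> 2*h \<Longrightarrow> pd b f differentiable (at y)"
  shows "\<exists>\<xi>. dist \<xi> x \<le> 2*h \<and>
    f (x + h *\<^sub>R axis a 1 + h *\<^sub>R axis b 1) - f (x + h *\<^sub>R axis a 1) - f (x + h *\<^sub>R axis b 1) + f x
      = h^2 * pd a (pd b f) \<xi>"
proof -
  define ea :: "real^3" where "ea = axis a 1"
  define eb :: "real^3" where "eb = axis b 1"
  define g where "g s = f (x + h *\<^sub>R ea + s *\<^sub>R eb) - f (x + s *\<^sub>R eb)" for s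
  define g' where "g' s = pd b f (x + h *\<^sub>R ea + s *\<^sub>R eb) - pd b f (x + s *\<^sub>R eb)" for s
  have "DERIV g s :> g' s" if "0 \<le> s" "s \<le> h" for s
  proof -
    have d1: "dist (x + h *\<^sub>R ea + s *\<^sub>R eb) x \<le> 2*h"
      using dist_two_axes[of x h a s b] that h unfolding ea_def eb_def by simp
    have d2: "dist (x + s *\<^sub>R eb) x \<le> 2*h"
      using dist_two_axes[of x 0 a s b] that h unfolding ea_def eb_def by simp
    have A: "((\<lambda>s. f ((x + h *\<^sub>R ea) + s *\<^sub>R eb)) has_real_derivative pd b f ((x + h *\<^sub>R ea) + s *\<^sub>R eb)) (at s)"
      unfolding eb_def by (rule pd_line_deriv) (use df[OF d1] in \<open>simp add: eb_def\<close>)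
    have B: "((\<lambda>s. f (x + s *\<^sub>R eb)) has_real_derivative pd b f (x + s *\<^sub>R eb)) (at s)"
      unfolding eb_def by (rule pd_line_deriv) (use df[OF d2] in \<open>simp add: eb_def\<close>)
    show ?thesis unfolding g_def g'_def using DERIV_diff[OF A B] by simp
  qed
  then obtain \<sigma> where s: "0 < \<sigma>" "\<sigma> < h" "g h - g 0 = (h - 0) * g' \<sigma>"
    using MVT2[OF h, of g g'] by auto
  define \<phi> where "\<phi> r = pd b f (x + \<sigma> *\<^sub>R eb + r *\<^sub>R ea)" for r
  have "DERIV \<phi> r :> pd a (pd b f) (x + \<sigma> *\<^sub>R eb + r *\<^sub>R ea)" if "0 \<le> r" "r \<le> h" for r
  proof -
    have d1: "dist (x + \<sigma> *\<^sub>R eb + r *\<^sub>R ea) x \<le> 2*h"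
      using dist_two_axes[of x \<sigma> b r a] that h s unfolding ea_def eb_def by simp
    show ?thesis unfolding \<phi>_def ea_def by (rule pd_line_deriv) (use dg[OF d1] in \<open>simp add: ea_def\<close>)
  qed
  then obtain \<rho> where r: "0 < \<rho>" "\<rho> < h"
     "\<phi> h - \<phi> 0 = (h - 0) * pd a (pd b f) (x + \<sigma> *\<^sub>R eb + \<rho> *\<^sub>R ea)"
    using MVT2[OF h, of \<phi> "\<lambda>r. pd a (pd b f) (x + \<sigma> *\<^sub>R eb + r *\<^sub>R ea)"] by auto
  have "g' \<sigma> = \<phi> h - \<phi> 0"
    unfolding g'_def \<phi>_def by (simp add: algebra_simps)
  moreover have "g h - g 0 = f (x + h *\<^sub>R axis a 1 + h *\<^sub>R axis b 1) - f (x + h *\<^sub>R axis a 1) - f (x + h *\<^sub>R axis b 1) + f x"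
    unfolding g_def ea_def eb_def by simp
  moreover have "dist (x + \<sigma> *\<^sub>R eb + \<rho> *\<^sub>R ea) x \<le> 2*h"
    using dist_two_axes[of x \<sigma> b \<rho> a] r s unfolding ea_def eb_def by simp
  ultimately show ?thesis using s r by (intro exI[of _ "x + \<sigma> *\<^sub>R eb + \<rho> *\<^sub>R ea"]) (simp add: power2_eq_square)
qed

lemma schwarz_at:
  assumes V: "open V" and x: "x \<in> V" and sm: "smn V 2 f"
  shows "pd a (pd b f) x = pd b (pd a f) x"
proof (rule ccontr)
  assume ne: "pd a (pd b f) x \<noteq> pd b (pd a f) x"
  define A where "A = pd a (pd b f) x"
  define B where "B = pd b (pd a f) x"
  define e where "e = \<bar>A - B\<bar> / 2"
  have e: "e > 0" using ne unfolding e_def A_def B_def by simp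
  have s1: "smn V 1 (pd a f)" "smn V 1 (pd b f)" using sm by (auto simp: smn_Suc numeral_2_eq_2)
  have s0: "smn V 0 (pd a (pd b f))" "smn V 0 (pd b (pd a f))" using s1 by (auto simp: smn_Suc)
  have cA: "continuous (at x) (pd a (pd b f))"
    using smn_diff_at[OF V s0(1) x] by (simp add: differentiable_imp_continuous_within)
  have cB: "continuous (at x) (pd b (pd a f))"
    using smn_diff_at[OF V s0(2) x] by (simp add: differentiable_imp_continuous_within)
  obtain d1 where d1: "d1 > 0" "\<And>y. dist y x < d1 \<Longrightarrow> dist (pd a (pd b f) y) A < e"
    using cA e unfolding continuous_at_eps_delta A_def by blast
  obtain d2 where d2: "d2 > 0" "\<And>y. dist y x < d2 \<Longrightarrow> dist (pd b (pd a f) y) B < e"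
    using cB e unfolding continuous_at_eps_delta B_def by blast
  obtain d3 where d3: "d3 > 0" "ball x d3 \<subseteq> V" using V x open_contains_ball by blast
  define h where "h = min d1 (min d2 d3) / 3"
  have h: "h > 0" "2*h < d1" "2*h < d2" "2*h < d3" using d1 d2 d3 unfolding h_def by auto
  have inV: "y \<in> V" if "dist y x \<le> 2*h" for y
    using that h d3 by (auto simp: dist_commute)
  have sf: "smn V 0 f" using sm smn_mono by blast
  have s1': "smn V 0 (pd a f)" "smn V 0 (pd b f)" using s1 smn_mono by blast+
  obtain \<xi> where xi: "dist \<xi> x \<le> 2*h"
    "f (x + h *\<^sub>R axis a 1 + h *\<^sub>R axis b 1) - f (x + h *\<^sub>R axis a 1) - f (x + h *\<^sub>R axis b 1) + f x
      = h^2 * pd a (pd b f) \<xi>"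
    using mvt2d[OF h(1), of x f b a] smn_diff_at[OF V sf] smn_diff_at[OF V s1'(2)] inV by blast
  obtain \<eta> where eta: "dist \<eta> x \<le> 2*h"
    "f (x + h *\<^sub>R axis b 1 + h *\<^sub>R axis a 1) - f (x + h *\<^sub>R axis b 1) - f (x + h *\<^sub>R axis a 1) + f x
      = h^2 * pd b (pd a f) \<eta>"
    using mvt2d[OF h(1), of x f a b] smn_diff_at[OF V sf] smn_diff_at[OF V s1'(1)] inV by blast
  have "h^2 * pd a (pd b f) \<xi> = h^2 * pd b (pd a f) \<eta>"
    using xi(2) eta(2) by (simp add: algebra_simps)
  hence eq: "pd a (pd b f) \<xi> = pd b (pd a f) \<eta>" using h(1) by simp
  have "dist (pd a (pd b f) \<xi>) A < e" using d1(2) xi(1) h by simp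
  moreover have "dist (pd b (pd a f) \<eta>) B < e" using d2(2) eta(1) h by simp
  ultimately have "\<bar>A - B\<bar> < 2 * e" using eq by (simp add: dist_real_def)
  thus False unfolding e_def by simp
qed



lemma sm_pd: "smooth_on V f \<Longrightarrow> smooth_on V (pd a f)"
  by (simp add: smooth_smn smn_Suc del: One_nat_def) (metis smn_Suc)

lemma sm_add: "open V \<Longrightarrow> smooth_on V f \<Longrightarrow> smooth_on V g \<Longrightarrow> smooth_on V (\<lambda>y. f y + g y)"
  by (simp add: smooth_smn smn_add)

lemma sm_mult: "open V \<Longrightarrow> smooth_on V f \<Longrightarrow> smooth_on V g \<Longrightarrow> smooth_on V (\<lambda>y. f y * g y)"
  by (simp add: smooth_smn smn_mult)

lemma sm_const: "smooth_on V (\<lambda>y. c)"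
  by (simp add: smooth_smn smn_const)

lemma sm_coord: "smooth_on V (\<lambda>y. y $ i)"
  by (simp add: smooth_smn smn_coord)

lemma sm_cong: "open V \<Longrightarrow> eqv V f g \<Longrightarrow> smooth_on V f \<Longrightarrow> smooth_on V g"
  using smn_cong by (metis smooth_smn)

lemma sm_diff_at: "open V \<Longrightarrow> smooth_on V f \<Longrightarrow> x \<in> V \<Longrightarrow> f differentiable (at x)"
  using smn_diff_at smooth_smn by metis

lemma sm_schwarz: "open V \<Longrightarrow> smooth_on V f \<Longrightarrow> x \<in> V \<Longrightarrow> pd a (pd b f) x = pd b (pd a f) x"
  using schwarz_at smooth_smn by metis

lemma sm_subset: "smooth_on U f \<Longrightarrow> V \<subseteq> U \<Longrightarrow> smooth_on V f"
  unfolding smooth_on_def using differentiable_on_subset by blast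

lemma boost_eq: "boost a w = (\<lambda>y. y $ a * pd 0 w y + y $ 0 * pd a w y)"
  by (rule ext) (simp add: boost_def)

lemma sm_boost: "open V \<Longrightarrow> smooth_on V w \<Longrightarrow> smooth_on V (boost a w)"
  unfolding boost_eq by (intro sm_add sm_mult sm_coord sm_pd)

lemma sm_zapp: "open V \<Longrightarrow> smooth_on V w \<Longrightarrow> smooth_on V (zapp z w)"
  by (cases z) (auto intro: sm_boost sm_pd)

lemma sm_applyZ: "open V \<Longrightarrow> smooth_on V w \<Longrightarrow> smooth_on V (applyZ W w)"
  by (induction W) (auto intro: sm_zapp)

lemma zapp_cong: "open V \<Longrightarrow> eqv V f g \<Longrightarrow> eqv V (zapp z f) (zapp z g)"
proof (cases z)
  case (Dz a) assume "open V" "eqv V f g" thus ?thesis using Dz pd_cong by simp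
next
  case (Lz a) assume "open V" "eqv V f g"
  thus ?thesis using Lz pd_cong[of V f g 0] pd_cong[of V f g a] by (simp add: eqv_def boost_def)
qed

lemma applyZ_cong: "open V \<Longrightarrow> eqv V f g \<Longrightarrow> eqv V (applyZ W f) (applyZ W g)"
  by (induction W) (auto intro: zapp_cong)

lemma zapp_add:
  assumes "open V" "smooth_on V f" "smooth_on V g"
  shows "eqv V (zapp z (\<lambda>y. f y + g y)) (\<lambda>y. zapp z f y + zapp z g y)"
  unfolding eqv_def
proof
  fix x assume x: "x \<in> V"
  have df: "f differentiable (at x)" and dg: "g differentiable (at x)"
    using sm_diff_at assms x by blast+
  show "zapp z (\<lambda>y. f y + g y) x = zapp z f x + zapp z g x"
    by (cases z) (auto simp: pd_add_at[OF df dg] boost_def algebra_simps)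
qed

lemma zapp_mult:
  assumes "open V" "smooth_on V f" "smooth_on V g"
  shows "eqv V (zapp z (\<lambda>y. f y * g y)) (\<lambda>y. zapp z f y * g y + f y * zapp z g y)"
  unfolding eqv_def
proof
  fix x assume x: "x \<in> V"
  have df: "f differentiable (at x)" and dg: "g differentiable (at x)"
    using sm_diff_at assms x by blast+
  show "zapp z (\<lambda>y. f y * g y) x = zapp z f x * g x + f x * zapp z g x"
    by (cases z) (auto simp: pd_mult_at[OF df dg] boost_def algebra_simps)
qed

lemma zapp_zero: "zapp z (\<lambda>y. 0) = (\<lambda>y. 0)"
  by (cases z) (auto simp: pd_const_fun boost_eq)

lemma applyZ_zero: "applyZ W (\<lambda>y. 0) = (\<lambda>y. 0)"
  by (induction W) (auto simp: zapp_zero)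

lemma applyZ_add:
  assumes "open V" "smooth_on V f" "smooth_on V g"
  shows "eqv V (applyZ W (\<lambda>y. f y + g y)) (\<lambda>y. applyZ W f y + applyZ W g y)"
proof (induction W)
  case Nil thus ?case by simp
next
  case (Cons z W)
  have "eqv V (zapp z (applyZ W (\<lambda>y. f y + g y))) (zapp z (\<lambda>y. applyZ W f y + applyZ W g y))"
    by (rule zapp_cong[OF assms(1) Cons])
  moreover have "eqv V (zapp z (\<lambda>y. applyZ W f y + applyZ W g y)) (\<lambda>y. zapp z (applyZ W f) y + zapp z (applyZ W g) y)"
    by (rule zapp_add) (auto intro: sm_applyZ assms)
  ultimately show ?case using eqv_trans by simp
qed

lemma zapp_sum_list:
  assumes "open V" "\<forall>p\<in>set ps. smooth_on V (P p)"
  shows "eqv V (zapp z (\<lambda>y. \<Sum>p\<leftarrow>ps. P p y)) (\<lambda>y. \<Sum>p\<leftarrow>ps. zapp z (P p) y)"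
  using assms(2)
proof (induction ps)
  case Nil thus ?case by (simp add: zapp_zero)
next
  case (Cons q ps)
  have sm: "smooth_on V (\<lambda>y. \<Sum>p\<leftarrow>ps. P p y)"
    using Cons.prems
  proof (induction ps)
    case Nil thus ?case by (simp add: sm_const)
  next
    case (Cons r ps) thus ?case using sm_add[OF assms(1)] by simp
  qed
  have "eqv V (zapp z (\<lambda>y. P q y + (\<Sum>p\<leftarrow>ps. P p y))) (\<lambda>y. zapp z (P q) y + zapp z (\<lambda>y. \<Sum>p\<leftarrow>ps. P p y) y)"
    by (rule zapp_add[OF assms(1)]) (use Cons.prems sm in auto)
  moreover have "eqv V (\<lambda>y. zapp z (P q) y + zapp z (\<lambda>y. \<Sum>p\<leftarrow>ps. P p y) y) (\<lambda>y. zapp z (P q) y + (\<Sum>p\<leftarrow>ps. zapp z (P p) y))"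
    using Cons by (auto simp: eqv_def)
  ultimately show ?case using eqv_trans by simp
qed

fun splits :: "'a list \<Rightarrow> ('a list \<times> 'a list) list" where
  "splits [] = [([], [])]"
| "splits (x # xs) = map (\<lambda>(a, b). (a, x # b)) (splits xs) @ map (\<lambda>(a, b). (x # a, b)) (splits xs)"

lemma applyZ_leibniz:
  assumes V: "open V" and f: "smooth_on V f" and g: "smooth_on V g"
  shows "eqv V (applyZ W (\<lambda>y. f y * g y)) (\<lambda>y. \<Sum>(A, B)\<leftarrow>splits W. applyZ A f y * applyZ B g y)"
proof (induction W)
  case Nil thus ?case by simp
next
  case (Cons z W)
  define P where "P = (\<lambda>(A, B) y. applyZ A f y * applyZ B g y)"
  have PP: "(\<lambda>(A, B). applyZ A f y * applyZ B g y) = (\<lambda>p. P p y)" for y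
    unfolding P_def by auto
  have smP: "\<forall>p\<in>set (splits W). smooth_on V (P p)"
    unfolding P_def by (auto intro!: sm_mult sm_applyZ V f g)
  have 1: "eqv V (zapp z (applyZ W (\<lambda>y. f y * g y))) (zapp z (\<lambda>y. \<Sum>p\<leftarrow>splits W. P p y))"
    using zapp_cong[OF V Cons] PP by simp
  have 2: "eqv V (zapp z (\<lambda>y. \<Sum>p\<leftarrow>splits W. P p y)) (\<lambda>y. \<Sum>p\<leftarrow>splits W. zapp z (P p) y)"
    by (rule zapp_sum_list[OF V smP])
  have 3: "eqv V (\<lambda>y. \<Sum>p\<leftarrow>splits W. zapp z (P p) y)
     (\<lambda>y. \<Sum>(A, B)\<leftarrow>splits (z # W). applyZ A f y * applyZ B g y)"
    unfolding eqv_def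
  proof
    fix y assume y: "y \<in> V"
    have "zapp z (P p) y = (case p of (A, B) \<Rightarrow> applyZ A f y * applyZ (z # B) g y + applyZ (z # A) f y * applyZ B g y)" for p
    proof (cases p)
      case (Pair A B)
      have "zapp z (P p) y = zapp z (applyZ A f) y * applyZ B g y + applyZ A f y * zapp z (applyZ B g) y"
        using zapp_mult[OF V sm_applyZ[OF V f] sm_applyZ[OF V g], of z A B] y
        unfolding P_def Pair eqv_def by auto
      thus ?thesis using Pair by (simp add: algebra_simps)
    qed
    thus "(\<Sum>p\<leftarrow>splits W. zapp z (P p) y) = (\<Sum>(A, B)\<leftarrow>splits (z # W). applyZ A f y * applyZ B g y)"
      by (simp add: sum_list_addf o_def case_prod_unfold)
  qed
  show ?case using eqv_trans[OF eqv_trans[OF 1 2] 3] by simp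
qed

lemma splits_hd: "\<exists>R. splits xs = ([], xs) # R \<and> (\<forall>p\<in>set R. fst p \<noteq> [])"
proof (induction xs)
  case Nil thus ?case by simp
next
  case (Cons x xs)
  then obtain R where R: "splits xs = ([], xs) # R" "\<forall>p\<in>set R. fst p \<noteq> []" by blast
  show ?case
    by (rule exI[of _ "map (\<lambda>(a, b). (a, x # b)) R @ map (\<lambda>(a, b). (x # a, b)) (splits xs)"])
       (use R in auto)
qed

lemma splits_props: "(A, B) \<in> set (splits xs) \<Longrightarrow> length A + length B = length xs \<and> set A \<subseteq> set xs \<and> set B \<subseteq> set xs"
proof (induction xs arbitrary: A B)
  case Nil thus ?case by simp
next
  case (Cons x xs)
  from Cons.prems obtain a b where ab: "(a, b) \<in> set (splits xs)" "(A = a \<and> B = x # b) \<or> (A = x # a \<and> B = b)"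
    by auto
  with Cons.IH[OF ab(1)] show ?case by auto
qed

lemma splits_length: "length (splits xs) = 2 ^ length xs"
  by (induction xs) auto

lemma splits_append: "(A, B) \<in> set (splits (xs @ ys)) \<Longrightarrow>
  \<exists>A1 B1 A2 B2. (A1, B1) \<in> set (splits xs) \<and> (A2, B2) \<in> set (splits ys) \<and> A = A1 @ A2 \<and> B = B1 @ B2"
proof (induction xs arbitrary: A B)
  case Nil thus ?case by force
next
  case (Cons x xs)
  from Cons.prems consider (l) a b where "(a, b) \<in> set (splits (xs @ ys))" "A = a" "B = x # b"
    | (r) a b where "(a, b) \<in> set (splits (xs @ ys))" "A = x # a" "B = b" by auto
  thus ?case
  proof cases
    case l
    then obtain A1 B1 A2 B2 where "(A1, B1) \<in> set (splits xs)" "(A2, B2) \<in> set (splits ys)" "a = A1 @ A2" "b = B1 @ B2"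
      using Cons.IH by blast
    thus ?thesis using l by (intro exI[of _ A1] exI[of _ "x # B1"] exI[of _ A2] exI[of _ B2]) force
  next
    case r
    then obtain A1 B1 A2 B2 where "(A1, B1) \<in> set (splits xs)" "(A2, B2) \<in> set (splits ys)" "a = A1 @ A2" "b = B1 @ B2"
      using Cons.IH by blast
    thus ?thesis using r by (intro exI[of _ "x # A1"] exI[of _ B1] exI[of _ A2] exI[of _ B2]) force
  qed
qed

lemma splits_map: "(A, B) \<in> set (splits (map f xs)) \<Longrightarrow>
  \<exists>A' B'. (A', B') \<in> set (splits xs) \<and> A = map f A' \<and> B = map f B'"
proof (induction xs arbitrary: A B)
  case Nil thus ?case by force
next
  case (Cons x xs)
  from Cons.prems consider (l) a b where "(a, b) \<in> set (splits (map f xs))" "A = a" "B = f x # b"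
    | (r) a b where "(a, b) \<in> set (splits (map f xs))" "A = f x # a" "B = b" by auto
  thus ?case
  proof cases
    case l
    then obtain A' B' where "(A', B') \<in> set (splits xs)" "a = map f A'" "b = map f B'" using Cons.IH by blast
    thus ?thesis using l by (intro exI[of _ A'] exI[of _ "x # B'"]) force
  next
    case r
    then obtain A' B' where "(A', B') \<in> set (splits xs)" "a = map f A'" "b = map f B'" using Cons.IH by blast
    thus ?thesis using r by (intro exI[of _ "x # A'"] exI[of _ B']) force
  qed
qed

lemma applyZ_append: "applyZ (xs @ ys) f = applyZ xs (applyZ ys f)"
  by (induction xs) auto

lemma pds_applyZ: "pds I f = applyZ (map Dz I) f"
  by (induction I) auto

lemma boosts_applyZ: "boosts J f = applyZ (map Lz J) f"
  by (induction J) auto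

lemma pds_boosts_applyZ: "pds I (boosts J f) = applyZ (map Dz I @ map Lz J) f"
  by (simp add: pds_applyZ boosts_applyZ applyZ_append)

lemma splits_IJ:
  assumes "(A, B) \<in> set (splits (map Dz I @ map Lz J))"
  shows "\<exists>I1 I2 J1 J2. A = map Dz I2 @ map Lz J2 \<and> B = map Dz I1 @ map Lz J1 \<and>
     length I1 + length I2 = length I \<and> length J1 + length J2 = length J \<and> set J1 \<subseteq> set J \<and> set J2 \<subseteq> set J"
proof -
  obtain A1 B1 A2 B2 where s: "(A1, B1) \<in> set (splits (map Dz I))" "(A2, B2) \<in> set (splits (map Lz J))"
    "A = A1 @ A2" "B = B1 @ B2" using splits_append[OF assms] by blast
  obtain I2 I1 where i: "(I2, I1) \<in> set (splits I)" "A1 = map Dz I2" "B1 = map Dz I1"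
    using splits_map[OF s(1)] by blast
  obtain J2 J1 where j: "(J2, J1) \<in> set (splits J)" "A2 = map Lz J2" "B2 = map Lz J1"
    using splits_map[OF s(2)] by blast
  show ?thesis using s i j splits_props[OF i(1)] splits_props[OF j(1)]
    by (intro exI[of _ I1] exI[of _ I2] exI[of _ J1] exI[of _ J2]) auto
qed

definition cm :: "3 \<Rightarrow> 3 \<Rightarrow> (real^3 \<Rightarrow> real) \<Rightarrow> real^3 \<Rightarrow> real" where
  "cm c b g = (if c = b then pd 0 g else if c = 0 then pd b g else (\<lambda>y. 0))"

lemma comm1:
  assumes V: "open V" and g: "smooth_on V g" and b: "b \<noteq> 0"
  shows "eqv V (pd c (boost b g)) (\<lambda>y. boost b (pd c g) y + cm c b g y)"
  unfolding eqv_def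
proof
  fix y assume y: "y \<in> V"
  have d: "(\<lambda>y. y $ i) differentiable (at y)" for i
    by (rule sm_diff_at[OF V sm_coord y])
  have dp: "pd i g differentiable (at y)" for i
    by (rule sm_diff_at[OF V sm_pd[OF g] y])
  have dm: "(\<lambda>z. z $ i * pd j g z) differentiable (at y)" for i j
    by (rule sm_diff_at[OF V sm_mult[OF V sm_coord sm_pd[OF g]] y])
  have "pd c (boost b g) y = pd c (\<lambda>z. z $ b * pd 0 g z) y + pd c (\<lambda>z. z $ 0 * pd b g z) y"
    unfolding boost_eq by (rule pd_add_at[OF dm dm])
  also have "\<dots> = (if b = c then 1 else 0) * pd 0 g y + y $ b * pd c (pd 0 g) y
      + ((if 0 = c then 1 else 0) * pd b g y + y $ 0 * pd c (pd b g) y)"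
    by (simp add: pd_mult_at[OF d dp] pd_coord)
  also have "\<dots> = boost b (pd c g) y + cm c b g y"
    using b sm_schwarz[OF V g y, of c 0] sm_schwarz[OF V g y, of c b]
    by (auto simp: boost_def cm_def)
  finally show "pd c (boost b g) y = boost b (pd c g) y + cm c b g y" .
qed

lemma sm_cm: "open V \<Longrightarrow> smooth_on V g \<Longrightarrow> smooth_on V (cm c b g)"
  by (auto simp: cm_def intro: sm_pd sm_const)



abbreviation cntL :: "zop list \<Rightarrow> nat" where "cntL W \<equiv> length (filter isL W)"

lemma finite_Zops: "finite Zops" by (simp add: Zops_def)

lemma finite_Zlists: "finite {zs. set zs \<subseteq> Zops \<and> length zs \<le> p \<and> cntL zs \<le> k}"
  by (rule finite_subset[OF _ finite_lists_length_le[OF finite_Zops, of p]]) auto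

lemma znorm_set: "{\<bar>applyZ zs w x\<bar> | zs. set zs \<subseteq> Zops \<and> length zs \<le> p \<and> cntL zs \<le> k}
   = (\<lambda>zs. \<bar>applyZ zs w x\<bar>) ` {zs. set zs \<subseteq> Zops \<and> length zs \<le> p \<and> cntL zs \<le> k}"
  by auto

lemma znorm_ge:
  assumes "set zs \<subseteq> Zops" "length zs \<le> p" "cntL zs \<le> k"
  shows "\<bar>applyZ zs w x\<bar> \<le> znorm p k w x"
  unfolding znorm_def znorm_set
  by (rule Max_ge) (use assms finite_Zlists in auto)

lemma znorm_attained:
  "\<exists>zs. set zs \<subseteq> Zops \<and> length zs \<le> p \<and> cntL zs \<le> k \<and> znorm p k w x = \<bar>applyZ zs w x\<bar>"
proof -
  have ne: "{zs. set zs \<subseteq> Zops \<and> length zs \<le> p \<and> cntL zs \<le> k} \<noteq> {}"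
  proof -
    have "[] \<in> {zs. set zs \<subseteq> Zops \<and> length zs \<le> p \<and> cntL zs \<le> k}" by simp
    thus ?thesis by blast
  qed
  have "znorm p k w x \<in> (\<lambda>zs. \<bar>applyZ zs w x\<bar>) ` {zs. set zs \<subseteq> Zops \<and> length zs \<le> p \<and> cntL zs \<le> k}"
    unfolding znorm_def znorm_set by (rule Max_in) (use finite_Zlists ne in auto)
  thus ?thesis by auto
qed

lemma znorm_nonneg: "0 \<le> znorm p k w x"
  using znorm_ge[of "[]" p k w x] by simp

lemma znorm_mono: "p \<le> p' \<Longrightarrow> k \<le> k' \<Longrightarrow> znorm p k w x \<le> znorm p' k' w x"
  using znorm_attained[of p k w x] znorm_ge[of _ p' k' w x] by (metis order_trans)

lemma znorm_0: "\<bar>w x\<bar> \<le> znorm p k w x"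
  using znorm_ge[of "[]" p k w x] by simp

lemma dz_set: "{znorm p k (pd a w) x | a. a \<in> (UNIV :: 3 set)} = (\<lambda>a. znorm p k (pd a w) x) ` UNIV"
  by auto

lemma dznorm_ge: "znorm p k (pd a w) x \<le> dznorm p k w x"
  unfolding dznorm_def dz_set by (rule Max_ge) auto

lemma dznorm_attained: "\<exists>a. dznorm p k w x = znorm p k (pd a w) x"
proof -
  have "dznorm p k w x \<in> {znorm p k (pd a w) x | a. a \<in> (UNIV :: 3 set)}"
    unfolding dznorm_def dz_set by (rule Max_in) auto
  thus ?thesis by auto
qed

lemma dznorm_nonneg: "0 \<le> dznorm p k w x"
  using dznorm_ge[of p k 0 w x] znorm_nonneg[of p k "pd 0 w" x] by linarith

lemma dznorm_mono: "p \<le> p' \<Longrightarrow> k \<le> k' \<Longrightarrow> dznorm p k w x \<le> dznorm p' k' w x"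
  using dznorm_attained[of p k w x] dznorm_ge[of p' k' _ w x] znorm_mono by (metis order_trans)

lemma applyZ_le_dznorm:
  assumes "set zs \<subseteq> Zops" "length zs \<le> p" "cntL zs \<le> k"
  shows "\<bar>applyZ zs (pd a w) x\<bar> \<le> dznorm p k w x"
  using znorm_ge[OF assms, of "pd a w" x] dznorm_ge[of p k a w x] by linarith

lemma Dz_Zops: "Dz a \<in> Zops"
  using type3_cases[of a] by (auto simp: Zops_def)

lemma Lz_Zops: "Lz b \<in> Zops \<longleftrightarrow> b = 1 \<or> b = 2"
  by (auto simp: Zops_def)

lemma lemmaM:
  assumes V: "open V" and u: "smooth_on V u" and x: "x \<in> V"
  shows "set W1 \<subseteq> Zops \<Longrightarrow> set W2 \<subseteq> Zops \<Longrightarrow>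
    \<bar>applyZ (W1 @ Dz \<beta> # W2) u x\<bar> \<le> 3 ^ length W2 * dznorm (length W1 + length W2) (cntL W1 + cntL W2) u x"
proof (induction W2 arbitrary: W1 \<beta>)
  case Nil
  thus ?case using applyZ_le_dznorm[of W1 "length W1" "cntL W1" \<beta> u x] by (simp add: applyZ_append)
next
  case (Cons z W2)
  let ?D = "dznorm (length W1 + length (z # W2)) (cntL W1 + cntL (z # W2)) u x"
  have Dn: "0 \<le> ?D" by (rule dznorm_nonneg)
  show ?case
  proof (cases z)
    case (Dz \<gamma>)
    have "\<bar>applyZ ((W1 @ [Dz \<beta>]) @ Dz \<gamma> # W2) u x\<bar>
       \<le> 3 ^ length W2 * dznorm (length (W1 @ [Dz \<beta>]) + length W2) (cntL (W1 @ [Dz \<beta>]) + cntL W2) u x"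
      by (rule Cons.IH) (use Cons.prems Dz_Zops in auto)
    also have "\<dots> = 3 ^ length W2 * ?D" using Dz by simp
    also have "\<dots> \<le> 3 ^ length (z # W2) * ?D" using Dn by (simp add: mult_right_mono)
    finally show ?thesis using Dz by simp
  next
    case (Lz b)
    have b: "b = 1 \<or> b = 2" using Cons.prems Lz Lz_Zops by auto
    hence b0: "b \<noteq> 0" by auto
    define g where "g = applyZ W2 u"
    have g: "smooth_on V g" unfolding g_def by (rule sm_applyZ[OF V u])
    have "eqv V (applyZ W1 (pd \<beta> (boost b g))) (applyZ W1 (\<lambda>y. boost b (pd \<beta> g) y + cm \<beta> b g y))"
      by (rule applyZ_cong[OF V comm1[OF V g b0]])
    moreover have "eqv V (applyZ W1 (\<lambda>y. boost b (pd \<beta> g) y + cm \<beta> b g y))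
        (\<lambda>y. applyZ W1 (boost b (pd \<beta> g)) y + applyZ W1 (cm \<beta> b g) y)"
      by (rule applyZ_add[OF V sm_boost[OF V sm_pd[OF g]] sm_cm[OF V g]])
    ultimately have split: "applyZ (W1 @ Dz \<beta> # z # W2) u x = applyZ W1 (boost b (pd \<beta> g)) x + applyZ W1 (cm \<beta> b g) x"
      using x Lz unfolding eqv_def g_def by (simp add: applyZ_append)
    have T1: "\<bar>applyZ W1 (boost b (pd \<beta> g)) x\<bar> \<le> 3 ^ length W2 * ?D"
    proof -
      have "\<bar>applyZ ((W1 @ [Lz b]) @ Dz \<beta> # W2) u x\<bar>
         \<le> 3 ^ length W2 * dznorm (length (W1 @ [Lz b]) + length W2) (cntL (W1 @ [Lz b]) + cntL W2) u x"
        by (rule Cons.IH) (use Cons.prems Lz in auto)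
      thus ?thesis using Lz by (simp add: applyZ_append g_def)
    qed
    have T2: "\<bar>applyZ W1 (cm \<beta> b g) x\<bar> \<le> 3 ^ length W2 * ?D"
    proof -
      have gen: "\<bar>applyZ W1 (pd c g) x\<bar> \<le> 3 ^ length W2 * ?D" for c
      proof -
        have "\<bar>applyZ (W1 @ Dz c # W2) u x\<bar> \<le> 3 ^ length W2 * dznorm (length W1 + length W2) (cntL W1 + cntL W2) u x"
          by (rule Cons.IH) (use Cons.prems in auto)
        also have "\<dots> \<le> 3 ^ length W2 * ?D"
          by (rule mult_left_mono[OF dznorm_mono]) auto
        finally show ?thesis by (simp add: applyZ_append g_def)
      qed
      show ?thesis
        using gen[of 0] gen[of b] Dn by (auto simp: cm_def applyZ_zero)
    qed
    have "\<bar>applyZ (W1 @ Dz \<beta> # z # W2) u x\<bar> \<le> 2 * (3 ^ length W2 * ?D)"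
      using split T1 T2 by linarith
    also have "\<dots> \<le> 3 ^ length (z # W2) * ?D" using Dn by (simp add: mult_right_mono)
    finally show ?thesis .
  qed
qed



lemma boosts_append: "boosts (xs @ ys) f = boosts xs (boosts ys f)"
  by (induction xs) auto

lemma filt_Dz: "filter isL (map Dz I) = []"
  by (induction I) auto

lemma filt_Lz: "filter isL (map Lz J) = map Lz J"
  by (induction J) auto

lemma cntL_IJ: "cntL (map Dz I @ map Lz J) = length J"
  by (simp add: filt_Dz filt_Lz)

lemma PB_cong: "open V \<Longrightarrow> eqv V f g \<Longrightarrow> eqv V (pds I (boosts A f)) (pds I (boosts A g))"
  unfolding pds_boosts_applyZ by (rule applyZ_cong)

lemma PB_add: "open V \<Longrightarrow> smooth_on V f \<Longrightarrow> smooth_on V g \<Longrightarrow>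
   eqv V (pds I (boosts A (\<lambda>y. f y + g y))) (\<lambda>y. pds I (boosts A f) y + pds I (boosts A g) y)"
  unfolding pds_boosts_applyZ by (rule applyZ_add)

lemma PB_zero: "pds I (boosts A (\<lambda>y. 0)) = (\<lambda>y. 0)"
  unfolding pds_boosts_applyZ by (rule applyZ_zero)

lemma sm_pds: "open V \<Longrightarrow> smooth_on V f \<Longrightarrow> smooth_on V (pds I f)"
  unfolding pds_applyZ by (rule sm_applyZ)

lemma sm_boosts: "open V \<Longrightarrow> smooth_on V f \<Longrightarrow> smooth_on V (boosts I f)"
  unfolding boosts_applyZ by (rule sm_applyZ)

lemma pds_pd_comm: "open V \<Longrightarrow> smooth_on V f \<Longrightarrow> eqv V (pds I (pd a f)) (pd a (pds I f))"
proof (induction I)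
  case Nil thus ?case by simp
next
  case (Cons i I)
  have "eqv V (pd i (pds I (pd a f))) (pd i (pd a (pds I f)))"
    by (rule pd_cong) (use Cons in auto)
  moreover have "eqv V (pd i (pd a (pds I f))) (pd a (pd i (pds I f)))"
    unfolding eqv_def using sm_schwarz[OF Cons.prems(1) sm_pds[OF Cons.prems]] by blast
  ultimately show ?case using eqv_trans by simp
qed

lemma ident2:
  assumes V: "open V" and h: "smooth_on V h" and b: "b \<noteq> 0"
  shows "eqv V (pd \<alpha> (pd \<beta> (boost b h)))
    (\<lambda>y. boost b (pd \<alpha> (pd \<beta> h)) y + cm \<alpha> b (pd \<beta> h) y + pd \<alpha> (cm \<beta> b h) y)"
proof -
  have 1: "eqv V (pd \<alpha> (pd \<beta> (boost b h))) (pd \<alpha> (\<lambda>y. boost b (pd \<beta> h) y + cm \<beta> b h y))"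
    by (rule pd_cong[OF V comm1[OF V h b]])
  have 2: "eqv V (pd \<alpha> (\<lambda>y. boost b (pd \<beta> h) y + cm \<beta> b h y)) (\<lambda>y. pd \<alpha> (boost b (pd \<beta> h)) y + pd \<alpha> (cm \<beta> b h) y)"
    using zapp_add[OF V sm_boost[OF V sm_pd[OF h]] sm_cm[OF V h], of "Dz \<alpha>"] by simp
  have 3: "eqv V (pd \<alpha> (boost b (pd \<beta> h))) (\<lambda>y. boost b (pd \<alpha> (pd \<beta> h)) y + cm \<alpha> b (pd \<beta> h) y)"
    by (rule comm1[OF V sm_pd[OF h] b])
  show ?thesis using 1 2 3 by (auto simp: eqv_def)
qed

definition Js :: "nat \<Rightarrow> 3 list set" where
  "Js m = {J'. set J' \<subseteq> {1, 2} \<and> length J' < m}"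

lemma finite_Js: "finite (Js m)"
  unfolding Js_def
  by (rule finite_subset[OF _ finite_lists_length_le[of "{1,2}" m]]) auto

lemma Js_mono: "m \<le> m' \<Longrightarrow> Js m \<subseteq> Js m'"
  unfolding Js_def by auto

definition S2 :: "(real^3 \<Rightarrow> real) \<Rightarrow> 3 list \<Rightarrow> nat \<Rightarrow> real^3 \<Rightarrow> real" where
  "S2 u I m x = (\<Sum>J'\<in>Js m. \<Sum>\<gamma>\<in>UNIV. \<Sum>\<delta>\<in>UNIV. \<bar>pd \<gamma> (pd \<delta> (pds I (boosts J' u))) x\<bar>)"

lemma S2_nonneg: "0 \<le> S2 u I m x"
  unfolding S2_def by (intro sum_nonneg) auto

lemma S2_ge: "J' \<in> Js m \<Longrightarrow> \<bar>pd \<gamma> (pd \<delta> (pds I (boosts J' u))) x\<bar> \<le> S2 u I m x"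
proof -
  assume J: "J' \<in> Js m"
  have "\<bar>pd \<gamma> (pd \<delta> (pds I (boosts J' u))) x\<bar> \<le> (\<Sum>\<delta>\<in>UNIV. \<bar>pd \<gamma> (pd \<delta> (pds I (boosts J' u))) x\<bar>)"
    by (rule member_le_sum) auto
  also have "\<dots> \<le> (\<Sum>\<gamma>\<in>UNIV. \<Sum>\<delta>\<in>UNIV. \<bar>pd \<gamma> (pd \<delta> (pds I (boosts J' u))) x\<bar>)"
    by (rule member_le_sum[of _ _ "\<lambda>\<gamma>. \<Sum>\<delta>\<in>UNIV. \<bar>pd \<gamma> (pd \<delta> (pds I (boosts J' u))) x\<bar>"])
       (auto intro: sum_nonneg)
  also have "\<dots> \<le> S2 u I m x" unfolding S2_def
    by (rule member_le_sum[of _ _ "\<lambda>J'. \<Sum>\<gamma>\<in>UNIV. \<Sum>\<delta>\<in>UNIV. \<bar>pd \<gamma> (pd \<delta> (pds I (boosts J' u))) x\<bar>"])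
       (auto intro!: sum_nonneg J finite_Js)
  finally show ?thesis .
qed

lemma S2_mono: "m \<le> m' \<Longrightarrow> S2 u I m x \<le> S2 u I m' x"
  unfolding S2_def by (rule sum_mono2[OF finite_Js Js_mono]) (auto intro!: sum_nonneg)

lemma lemmaN:
  assumes V: "open V" and u: "smooth_on V u" and x: "x \<in> V"
  shows "set A \<subseteq> {1,2} \<Longrightarrow> set B \<subseteq> {1,2} \<Longrightarrow>
    \<bar>pds I (boosts A (pd \<alpha> (pd \<beta> (boosts B u)))) x\<bar> \<le> 5 ^ length A * S2 u I (length A + length B + 1) x"
proof (induction A arbitrary: \<alpha> \<beta> B rule: rev_induct)
  case Nil
  have "eqv V (pds I (pd \<alpha> (pd \<beta> (boosts B u)))) (pd \<alpha> (pds I (pd \<beta> (boosts B u))))"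
    by (rule pds_pd_comm[OF V]) (intro sm_pd sm_boosts V u)
  moreover have "eqv V (pd \<alpha> (pds I (pd \<beta> (boosts B u)))) (pd \<alpha> (pd \<beta> (pds I (boosts B u))))"
    by (rule pd_cong[OF V pds_pd_comm[OF V sm_boosts[OF V u]]])
  ultimately have "pds I (pd \<alpha> (pd \<beta> (boosts B u))) x = pd \<alpha> (pd \<beta> (pds I (boosts B u))) x"
    using x by (auto simp: eqv_def)
  moreover have "B \<in> Js (length B + 1)" using Nil by (auto simp: Js_def)
  ultimately show ?case using S2_ge by simp
next
  case (snoc b A)
  have b: "b \<noteq> 0" using snoc.prems by auto
  have Asub: "set A \<subseteq> {1,2}" using snoc.prems by auto
  define h where "h = boosts B u"
  have h: "smooth_on V h" unfolding h_def by (rule sm_boosts[OF V u])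
  let ?S = "S2 u I (length A + length B + 1) x"
  let ?S' = "S2 u I (length (A @ [b]) + length B + 1) x"
  have IH: "\<And>\<alpha> \<beta>. \<bar>pds I (boosts A (pd \<alpha> (pd \<beta> h))) x\<bar> \<le> 5 ^ length A * ?S'"
  proof -
    fix \<alpha> \<beta>
    have "\<bar>pds I (boosts A (pd \<alpha> (pd \<beta> h))) x\<bar> \<le> 5 ^ length A * ?S"
      unfolding h_def by (rule snoc.IH[OF Asub snoc.prems(2)])
    also have "\<dots> \<le> 5 ^ length A * ?S'" by (rule mult_left_mono[OF S2_mono]) auto
    finally show "\<bar>pds I (boosts A (pd \<alpha> (pd \<beta> h))) x\<bar> \<le> 5 ^ length A * ?S'" .
  qed
  have IH2: "\<bar>pds I (boosts A (pd \<alpha> (pd \<beta> (boost b h)))) x\<bar> \<le> 5 ^ length A * ?S'"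
  proof -
    have "\<bar>pds I (boosts A (pd \<alpha> (pd \<beta> (boosts (b # B) u)))) x\<bar> \<le> 5 ^ length A * S2 u I (length A + length (b # B) + 1) x"
      by (rule snoc.IH[OF Asub]) (use snoc.prems b in auto)
    thus ?thesis by (simp add: h_def)
  qed
  have e1: "eqv V (pds I (boosts A (pd \<alpha> (pd \<beta> (boost b h)))))
     (pds I (boosts A (\<lambda>y. boost b (pd \<alpha> (pd \<beta> h)) y + cm \<alpha> b (pd \<beta> h) y + pd \<alpha> (cm \<beta> b h) y)))"
    by (rule PB_cong[OF V ident2[OF V h b]])
  have e2: "eqv V (pds I (boosts A (\<lambda>y. boost b (pd \<alpha> (pd \<beta> h)) y + cm \<alpha> b (pd \<beta> h) y + pd \<alpha> (cm \<beta> b h) y)))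
     (\<lambda>y. pds I (boosts A (\<lambda>y. boost b (pd \<alpha> (pd \<beta> h)) y + cm \<alpha> b (pd \<beta> h) y)) y + pds I (boosts A (pd \<alpha> (cm \<beta> b h))) y)"
    by (rule PB_add[OF V]) (intro sm_add sm_boost sm_pd sm_cm h V)+
  have e3: "eqv V (pds I (boosts A (\<lambda>y. boost b (pd \<alpha> (pd \<beta> h)) y + cm \<alpha> b (pd \<beta> h) y)))
     (\<lambda>y. pds I (boosts A (boost b (pd \<alpha> (pd \<beta> h)))) y + pds I (boosts A (cm \<alpha> b (pd \<beta> h))) y)"
    by (rule PB_add[OF V]) (intro sm_boost sm_pd sm_cm h V)+
  have eq: "pds I (boosts A (pd \<alpha> (pd \<beta> (boost b h)))) x =
     pds I (boosts A (boost b (pd \<alpha> (pd \<beta> h)))) x + pds I (boosts A (cm \<alpha> b (pd \<beta> h))) x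
     + pds I (boosts A (pd \<alpha> (cm \<beta> b h))) x"
    using e1 e2 e3 x by (simp add: eqv_def)
  have P2: "\<bar>pds I (boosts A (cm \<alpha> b (pd \<beta> h))) x\<bar> \<le> 5 ^ length A * ?S'"
    using IH[of 0 \<beta>] IH[of b \<beta>] by (auto simp: cm_def PB_zero intro: mult_nonneg_nonneg S2_nonneg)
  have P3: "\<bar>pds I (boosts A (pd \<alpha> (cm \<beta> b h))) x\<bar> \<le> 5 ^ length A * ?S'"
    using IH[of \<alpha> 0] IH[of \<alpha> b] by (auto simp: cm_def PB_zero pd_const_fun intro: mult_nonneg_nonneg S2_nonneg)
  have "\<bar>pds I (boosts A (boost b (pd \<alpha> (pd \<beta> h)))) x\<bar> \<le> 3 * (5 ^ length A * ?S')"
    using eq IH2 P2 P3 by linarith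
  also have "\<dots> \<le> 5 ^ length (A @ [b]) * ?S'"
    using S2_nonneg[of u I _ x] by (simp add: mult_right_mono)
  finally show ?case by (simp add: boosts_append h_def)
qed



lemma PB_ident2:
  assumes V: "open V" and h: "smooth_on V h" and b: "b \<noteq> 0" and x: "x \<in> V"
  shows "pds I (boosts A (pd \<alpha> (pd \<beta> (boost b h)))) x =
     pds I (boosts A (boost b (pd \<alpha> (pd \<beta> h)))) x + pds I (boosts A (cm \<alpha> b (pd \<beta> h))) x
     + pds I (boosts A (pd \<alpha> (cm \<beta> b h))) x"
proof -
  have e1: "eqv V (pds I (boosts A (pd \<alpha> (pd \<beta> (boost b h)))))
     (pds I (boosts A (\<lambda>y. boost b (pd \<alpha> (pd \<beta> h)) y + cm \<alpha> b (pd \<beta> h) y + pd \<alpha> (cm \<beta> b h) y)))"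
    by (rule PB_cong[OF V ident2[OF V h b]])
  have e2: "eqv V (pds I (boosts A (\<lambda>y. boost b (pd \<alpha> (pd \<beta> h)) y + cm \<alpha> b (pd \<beta> h) y + pd \<alpha> (cm \<beta> b h) y)))
     (\<lambda>y. pds I (boosts A (\<lambda>y. boost b (pd \<alpha> (pd \<beta> h)) y + cm \<alpha> b (pd \<beta> h) y)) y + pds I (boosts A (pd \<alpha> (cm \<beta> b h))) y)"
    by (rule PB_add[OF V]) (intro sm_add sm_boost sm_pd sm_cm h V)+
  have e3: "eqv V (pds I (boosts A (\<lambda>y. boost b (pd \<alpha> (pd \<beta> h)) y + cm \<alpha> b (pd \<beta> h) y)))
     (\<lambda>y. pds I (boosts A (boost b (pd \<alpha> (pd \<beta> h)))) y + pds I (boosts A (cm \<alpha> b (pd \<beta> h))) y)"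
    by (rule PB_add[OF V]) (intro sm_boost sm_pd sm_cm h V)+
  show ?thesis using e1 e2 e3 x by (simp add: eqv_def)
qed

lemma lemmaK':
  assumes V: "open V" and u: "smooth_on V u" and x: "x \<in> V"
  shows "set A \<subseteq> {1,2} \<Longrightarrow> set J0 \<subseteq> {1,2} \<Longrightarrow>
    \<bar>pds I (boosts A (boosts J0 (pd 0 (pd 0 u)))) x - pds I (boosts A (pd 0 (pd 0 (boosts J0 u)))) x\<bar>
      \<le> 2 * length J0 * 5 ^ (length A + length J0) * S2 u I (length A + length J0) x"
proof (induction J0 arbitrary: A)
  case Nil thus ?case by simp
next
  case (Cons b J1)
  have b: "b \<noteq> 0" using Cons.prems by auto
  define h where "h = boosts J1 u"
  have h: "smooth_on V h" unfolding h_def by (rule sm_boosts[OF V u])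
  define S where "S = S2 u I (length A + length (b # J1)) x"
  define P :: real where "P = 5 ^ (length A + length (b # J1))"
  have Sn: "0 \<le> S" unfolding S_def by (rule S2_nonneg)
  have IH: "\<bar>pds I (boosts (A @ [b]) (boosts J1 (pd 0 (pd 0 u)))) x - pds I (boosts (A @ [b]) (pd 0 (pd 0 h))) x\<bar>
      \<le> 2 * length J1 * P * S"
    using Cons.IH[of "A @ [b]"] Cons.prems unfolding h_def P_def S_def by simp
  have cm0: "cm 0 b k = pd b k" for k using b by (simp add: cm_def)
  have eq: "pds I (boosts A (pd 0 (pd 0 (boost b h)))) x =
     pds I (boosts A (boost b (pd 0 (pd 0 h)))) x + pds I (boosts A (pd b (pd 0 h))) x
     + pds I (boosts A (pd 0 (pd b h))) x"
    using PB_ident2[OF V h b x, of I A 0 0] by (simp add: cm0)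
  have N1: "\<bar>pds I (boosts A (pd b (pd 0 h))) x\<bar> \<le> 5 ^ length A * S"
    using lemmaN[OF V u x, of A J1 I b 0] Cons.prems unfolding h_def S_def by simp
  have N2: "\<bar>pds I (boosts A (pd 0 (pd b h))) x\<bar> \<le> 5 ^ length A * S"
    using lemmaN[OF V u x, of A J1 I 0 b] Cons.prems unfolding h_def S_def by simp
  have "(5::real) ^ length A \<le> P" unfolding P_def by (rule power_increasing) auto
  hence PS: "5 ^ length A * S \<le> P * S" using Sn by (rule mult_right_mono)
  have "\<bar>pds I (boosts A (boosts (b # J1) (pd 0 (pd 0 u)))) x - pds I (boosts A (pd 0 (pd 0 (boosts (b # J1) u)))) x\<bar>
     \<le> 2 * length J1 * P * S + 2 * (P * S)"
    using IH eq N1 N2 PS by (simp add: boosts_append h_def)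
  also have "\<dots> = 2 * length (b # J1) * P * S" by (simp add: algebra_simps)
  finally show ?case unfolding P_def S_def by (simp add: algebra_simps)
qed

lemma lemmaK:
  assumes V: "open V" and u: "smooth_on V u" and x: "x \<in> V" and J: "set J \<subseteq> {1,2}"
  shows "\<bar>pds I (boosts J (pd 0 (pd 0 u))) x - pd 0 (pd 0 (pds I (boosts J u))) x\<bar>
      \<le> 2 * length J * 5 ^ length J * S2 u I (length J) x"
proof -
  have f: "smooth_on V (boosts J u)" by (rule sm_boosts[OF V u])
  have "eqv V (pds I (pd 0 (pd 0 (boosts J u)))) (pd 0 (pds I (pd 0 (boosts J u))))"
    by (rule pds_pd_comm[OF V sm_pd[OF f]])
  moreover have "eqv V (pd 0 (pds I (pd 0 (boosts J u)))) (pd 0 (pd 0 (pds I (boosts J u))))"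
    by (rule pd_cong[OF V pds_pd_comm[OF V f]])
  ultimately have "pds I (pd 0 (pd 0 (boosts J u))) x = pd 0 (pd 0 (pds I (boosts J u))) x"
    using x by (simp add: eqv_def)
  thus ?thesis using lemmaK'[OF V u x, of "[]" J I] J by simp
qed

lemma pd_via_boost:
  fixes x :: "real^3"
  assumes t: "x $ 0 > 0" and a: "\<bar>x $ a\<bar> \<le> x $ 0"
  shows "\<bar>pd a g x\<bar> \<le> \<bar>boost a g x\<bar> / x $ 0 + \<bar>pd 0 g x\<bar>"
proof -
  have "x $ 0 * pd a g x = boost a g x - x $ a * pd 0 g x" by (simp add: boost_def)
  hence "\<bar>x $ 0 * pd a g x\<bar> \<le> \<bar>boost a g x\<bar> + \<bar>x $ a\<bar> * \<bar>pd 0 g x\<bar>"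
    by (simp add: abs_mult[symmetric])
  also have "\<dots> \<le> \<bar>boost a g x\<bar> + x $ 0 * \<bar>pd 0 g x\<bar>"
    using a by (simp add: mult_right_mono)
  finally have "x $ 0 * \<bar>pd a g x\<bar> \<le> \<bar>boost a g x\<bar> + x $ 0 * \<bar>pd 0 g x\<bar>"
    using t by (simp add: abs_mult)
  thus ?thesis using t by (simp add: field_simps)
qed

lemma lemmaS:
  assumes V: "open V" and u: "smooth_on V u" and x: "x \<in> V"
    and t: "x $ 0 > 0" and a1: "\<bar>x $ 1\<bar> \<le> x $ 0" and a2: "\<bar>x $ 2\<bar> \<le> x $ 0"
    and W0: "set W0 \<subseteq> Zops"
  shows "\<bar>pd \<gamma> (pd \<delta> (applyZ W0 u)) x\<bar> \<le> \<bar>pd 0 (pd 0 (applyZ W0 u)) x\<bar>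
     + 2 * (3 ^ length W0 * dznorm (length W0 + 1) (cntL W0 + 1) u x / x $ 0)"
proof -
  define w where "w = applyZ W0 u"
  have w: "smooth_on V w" unfolding w_def by (rule sm_applyZ[OF V u])
  define E where "E = 3 ^ length W0 * dznorm (length W0 + 1) (cntL W0 + 1) u x / x $ 0"
  have En: "0 \<le> E" unfolding E_def using t dznorm_nonneg by simp
  have bd: "\<bar>boost c (pd e w) x\<bar> / x $ 0 \<le> E" if c: "c = 1 \<or> c = 2" for c e
  proof -
    have "\<bar>applyZ ([Lz c] @ Dz e # W0) u x\<bar> \<le> 3 ^ length W0 * dznorm (length [Lz c] + length W0) (cntL [Lz c] + cntL W0) u x"
      by (rule lemmaM[OF V u x]) (use W0 c in \<open>auto simp: Zops_def\<close>)
    hence "\<bar>boost c (pd e w) x\<bar> \<le> 3 ^ length W0 * dznorm (length W0 + 1) (cntL W0 + 1) u x"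
      by (simp add: w_def add.commute)
    thus ?thesis unfolding E_def using t by (simp add: divide_right_mono)
  qed
  have ax: "\<bar>x $ c\<bar> \<le> x $ 0" if "c = 1 \<or> c = 2" for c using that a1 a2 by auto
  have step0: "\<bar>pd 0 (pd e w) x\<bar> \<le> \<bar>pd 0 (pd 0 w) x\<bar> + E" for e
  proof (cases "e = 0")
    case True thus ?thesis using En by simp
  next
    case False
    hence e: "e = 1 \<or> e = 2" using type3_cases[of e] by auto
    have "pd 0 (pd e w) x = pd e (pd 0 w) x" by (rule sm_schwarz[OF V w x])
    moreover have "\<bar>pd e (pd 0 w) x\<bar> \<le> \<bar>boost e (pd 0 w) x\<bar> / x $ 0 + \<bar>pd 0 (pd 0 w) x\<bar>"
      by (rule pd_via_boost[OF t ax[OF e]])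
    ultimately show ?thesis using bd[OF e, of 0] by simp
  qed
  have "\<bar>pd \<gamma> (pd \<delta> w) x\<bar> \<le> \<bar>pd 0 (pd 0 w) x\<bar> + 2 * E"
  proof (cases "\<gamma> = 0")
    case True thus ?thesis using step0[of \<delta>] En by simp
  next
    case False
    hence g: "\<gamma> = 1 \<or> \<gamma> = 2" using type3_cases[of \<gamma>] by auto
    have "\<bar>pd \<gamma> (pd \<delta> w) x\<bar> \<le> \<bar>boost \<gamma> (pd \<delta> w) x\<bar> / x $ 0 + \<bar>pd 0 (pd \<delta> w) x\<bar>"
      by (rule pd_via_boost[OF t ax[OF g]])
    thus ?thesis using bd[OF g, of \<delta>] step0[of \<delta>] by simp
  qed
  thus ?thesis unfolding w_def E_def .
qed



lemma S2_bound:
  assumes V: "open V" and u: "smooth_on V u" and x: "x \<in> V"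
    and t: "x $ 0 > 0" and a1: "\<bar>x $ 1\<bar> \<le> x $ 0" and a2: "\<bar>x $ 2\<bar> \<le> x $ 0"
    and J: "set J \<subseteq> {1,2}"
  shows "S2 u I (length J) x \<le> 9 * (\<Sum>J'\<in>Js (length J). \<bar>pd 0 (pd 0 (pds I (boosts J' u))) x\<bar>)
     + 9 * card (Js (length J)) * (2 * (3 ^ (length I + length J) * dznorm (length I + length J) (length J) u x / x $ 0))"
proof -
  define E where "E = 2 * (3 ^ (length I + length J) * dznorm (length I + length J) (length J) u x / x $ 0)"
  have tm: "\<bar>pd \<gamma> (pd \<delta> (pds I (boosts J' u))) x\<bar> \<le> \<bar>pd 0 (pd 0 (pds I (boosts J' u))) x\<bar> + E"
    if J': "J' \<in> Js (length J)" for J' \<gamma> \<delta>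
  proof -
    let ?W = "map Dz I @ map Lz J'"
    have W: "set ?W \<subseteq> Zops" using J' Dz_Zops by (auto simp: Js_def Zops_def)
    have lJ: "length J' < length J" using J' by (simp add: Js_def)
    have S: "\<bar>pd \<gamma> (pd \<delta> (applyZ ?W u)) x\<bar> \<le> \<bar>pd 0 (pd 0 (applyZ ?W u)) x\<bar>
       + 2 * (3 ^ length ?W * dznorm (length ?W + 1) (cntL ?W + 1) u x / x $ 0)"
      by (rule lemmaS[OF V u x t a1 a2 W])
    have p3: "(3::real) ^ length ?W \<le> 3 ^ (length I + length J)"
      by (rule power_increasing) (use lJ in auto)
    have dz: "dznorm (length ?W + 1) (cntL ?W + 1) u x \<le> dznorm (length I + length J) (length J) u x"
      by (rule dznorm_mono) (use lJ in \<open>auto simp: cntL_IJ\<close>)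
    have "3 ^ length ?W * dznorm (length ?W + 1) (cntL ?W + 1) u x \<le> 3 ^ (length I + length J) * dznorm (length I + length J) (length J) u x"
      by (rule mult_mono[OF p3 dz]) (auto intro: dznorm_nonneg)
    hence "2 * (3 ^ length ?W * dznorm (length ?W + 1) (cntL ?W + 1) u x / x $ 0) \<le> E"
      unfolding E_def using t by (simp add: divide_right_mono)
    thus ?thesis using S by (simp add: pds_boosts_applyZ)
  qed
  have "S2 u I (length J) x \<le> (\<Sum>J'\<in>Js (length J). \<Sum>\<gamma>\<in>(UNIV::3 set). \<Sum>\<delta>\<in>(UNIV::3 set). \<bar>pd 0 (pd 0 (pds I (boosts J' u))) x\<bar> + E)"
    unfolding S2_def by (intro sum_mono tm)
  also have "\<dots> = (\<Sum>J'\<in>Js (length J). 9 * (\<bar>pd 0 (pd 0 (pds I (boosts J' u))) x\<bar> + E))"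
    by simp
  also have "\<dots> = 9 * (\<Sum>J'\<in>Js (length J). \<bar>pd 0 (pd 0 (pds I (boosts J' u))) x\<bar>) + 9 * card (Js (length J)) * E"
    by (simp add: sum.distrib sum_distrib_left[symmetric] algebra_simps)
  finally show ?thesis unfolding E_def .
qed

definition KB :: "nat \<Rightarrow> nat \<Rightarrow> real" where
  "KB N M = 18 * N * 5 ^ N * (1 + 2 * card (Js N) * 3 ^ M)"

lemma KB_nonneg: "0 \<le> KB N M" unfolding KB_def by simp

lemma lemmaK2:
  assumes V: "open V" and u: "smooth_on V u" and x: "x \<in> V"
    and t: "x $ 0 > 0" and a1: "\<bar>x $ 1\<bar> \<le> x $ 0" and a2: "\<bar>x $ 2\<bar> \<le> x $ 0"
    and J: "set J \<subseteq> {1,2}" and N: "length J \<le> N" and M: "length I + length J \<le> M"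
  shows "\<bar>pds I (boosts J (pd 0 (pd 0 u))) x - pd 0 (pd 0 (pds I (boosts J u))) x\<bar>
    \<le> KB N M * (\<Sum>J'\<in>Js (length J). \<bar>pd 0 (pd 0 (pds I (boosts J' u))) x\<bar>)
     + KB N M * (1 / x $ 0 * dznorm (length I + length J) (length J) u x)"
proof -
  define Q where "Q = (\<Sum>J'\<in>Js (length J). \<bar>pd 0 (pd 0 (pds I (boosts J' u))) x\<bar>)"
  define D where "D = 1 / x $ 0 * dznorm (length I + length J) (length J) u x"
  have Qn: "0 \<le> Q" unfolding Q_def by (rule sum_nonneg) auto
  have Dn: "0 \<le> D" unfolding D_def using t dznorm_nonneg by simp
  define c1 :: real where "c1 = 2 * length J * 5 ^ length J"
  define c1' :: real where "c1' = 2 * N * 5 ^ N"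
  have c1: "0 \<le> c1" "c1 \<le> c1'" unfolding c1_def c1'_def using N
    by (auto intro!: mult_mono power_increasing)
  have K: "\<bar>pds I (boosts J (pd 0 (pd 0 u))) x - pd 0 (pd 0 (pds I (boosts J u))) x\<bar> \<le> c1 * S2 u I (length J) x"
    using lemmaK[OF V u x J, of I] unfolding c1_def by simp
  have card: "real (card (Js (length J))) \<le> card (Js N)"
    using card_mono[OF finite_Js Js_mono[OF N]] by simp
  have p3: "(3::real) ^ (length I + length J) \<le> 3 ^ M" by (rule power_increasing[OF M]) auto
  have S: "S2 u I (length J) x \<le> 9 * Q + 9 * card (Js (length J)) * (2 * (3 ^ (length I + length J) * D))"
    using S2_bound[OF V u x t a1 a2 J, of I] unfolding Q_def D_def by (simp add: field_simps)
  have "card (Js (length J)) * (3 ^ (length I + length J) * D) \<le> card (Js N) * (3 ^ M * D)"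
    by (rule mult_mono[OF card mult_right_mono[OF p3 Dn]]) (auto intro!: mult_nonneg_nonneg Dn)
  hence S': "S2 u I (length J) x \<le> 9 * Q + 18 * (card (Js N) * 3 ^ M) * D"
    using S by (simp add: algebra_simps)
  have "c1 * S2 u I (length J) x \<le> c1' * (9 * Q + 18 * (card (Js N) * 3 ^ M) * D)"
    by (rule mult_mono[OF c1(2) S']) (use c1 Qn Dn S2_nonneg in auto)
  also have "\<dots> = (9 * c1') * Q + (18 * c1' * card (Js N) * 3 ^ M) * D" by (simp add: algebra_simps)
  also have "\<dots> \<le> KB N M * Q + KB N M * D"
  proof (rule add_mono)
    show "9 * c1' * Q \<le> KB N M * Q"
      by (rule mult_right_mono[OF _ Qn]) (simp add: KB_def c1'_def algebra_simps)
    show "18 * c1' * card (Js N) * 3 ^ M * D \<le> KB N M * D"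
      by (rule mult_right_mono[OF _ Dn]) (simp add: KB_def c1'_def algebra_simps)
  qed
  finally show ?thesis using K unfolding Q_def D_def by linarith
qed



lemma sum_list_abs_bound:
  fixes f :: "'a \<Rightarrow> real" and c :: real
  shows "(\<forall>z\<in>set xs. \<bar>f z\<bar> \<le> c) \<Longrightarrow> \<bar>\<Sum>z\<leftarrow>xs. f z\<bar> \<le> length xs * c"
proof (induction xs)
  case Nil thus ?case by simp
next
  case (Cons a xs)
  have "\<bar>\<Sum>z\<leftarrow>a # xs. f z\<bar> \<le> \<bar>f a\<bar> + \<bar>\<Sum>z\<leftarrow>xs. f z\<bar>" by (simp add: abs_triangle_ineq)
  also have "\<dots> \<le> c + length xs * c" using Cons by (intro add_mono) auto
  finally show ?case by (simp add: algebra_simps)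
qed

lemma sm_inv0: "open V \<Longrightarrow> \<forall>y\<in>V. y $ 0 > 0 \<Longrightarrow> smooth_on V (\<lambda>y. c * inverse (y $ 0) ^ k)"
  using smn_inv0 smooth_smn by metis

lemma open_pos0: "open {y :: real^3. 0 < y $ 0}"
  by (rule open_Collect_less) (auto intro: continuous_intros)

lemma sm_Hunder:
  assumes V: "open V" and pos: "\<forall>y\<in>V. y $ 0 > 0" and H: "\<And>a b. smooth_on V (H a b)"
  shows "smooth_on V (Hunder H)"
proof -
  define iv where "iv k = (\<lambda>y::real^3. 1 * inverse (y $ 0) ^ k)" for k :: nat
  have iv: "smooth_on V (iv k)" for k unfolding iv_def by (rule sm_inv0[OF V pos])
  define F where "F = (\<lambda>y. H 0 0 y + (-2) * ((y $ 1 * iv 1 y) * H 1 0 y + (y $ 2 * iv 1 y) * H 2 0 y)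
     + (((y $ 1 * y $ 1) * iv 2 y) * H 1 1 y + ((y $ 1 * y $ 2) * iv 2 y) * H 1 2 y
       + (((y $ 2 * y $ 1) * iv 2 y) * H 2 1 y + ((y $ 2 * y $ 2) * iv 2 y) * H 2 2 y)))"
  have "smooth_on V F"
    unfolding F_def by (intro sm_add sm_mult sm_const sm_coord iv H V)
  moreover have "eqv V F (Hunder H)"
    unfolding eqv_def
  proof
    fix y assume "y \<in> V"
    hence ne: "y $ 0 \<noteq> 0" using pos by fastforce
    have n12: "(1::3) \<noteq> 2" by simp
    show "F y = Hunder H y"
      unfolding F_def Hunder_def iv_def using ne n12
      by (simp add: field_simps power2_eq_square)
  qed
  ultimately show ?thesis using sm_cong[OF V] by blast
qed

lemma rad_ge: "\<bar>x $ 1\<bar> \<le> rad x" "\<bar>x $ 2\<bar> \<le> rad x"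
proof -
  have "\<bar>x $ 1\<bar> = sqrt ((x $ 1)^2)" by simp
  also have "\<dots> \<le> rad x" unfolding rad_def by (rule real_sqrt_le_mono) simp
  finally show "\<bar>x $ 1\<bar> \<le> rad x" .
  have "\<bar>x $ 2\<bar> = sqrt ((x $ 2)^2)" by simp
  also have "\<dots> \<le> rad x" unfolding rad_def by (rule real_sqrt_le_mono) simp
  finally show "\<bar>x $ 2\<bar> \<le> rad x" .
qed



lemma finite_SA: "finite {(I1::3 list, I2::3 list, J1::3 list, J2::3 list). length I1 + length I2 \<le> length (I::3 list)
              \<and> set J1 \<subseteq> {1, 2} \<and> set J2 \<subseteq> {1, 2} \<and> length J1 + length J2 \<le> length (J::3 list)
              \<and> length I2 + length J2 \<ge> 1}"
proof -
  let ?L1 = "{xs::3 list. set xs \<subseteq> UNIV \<and> length xs \<le> length I}"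
  let ?L2 = "{xs::3 list. set xs \<subseteq> {1,2} \<and> length xs \<le> length J}"
  have "finite (?L1 \<times> ?L1 \<times> ?L2 \<times> ?L2)"
    by (intro finite_cartesian_product finite_lists_length_le) auto
  thus ?thesis by (rule finite_subset[rotated]) auto
qed

lemma finite_SC: "finite {(p1, p2, k1, k2). p1 + p2 \<le> (p::nat) \<and> p1 < p \<and> k1 + k2 \<le> (k::nat)}"
proof -
  have "finite ({..p} \<times> {..p} \<times> {..k} \<times> {..k})" by auto
  thus ?thesis by (rule finite_subset[rotated]) auto
qed

theorem lemma5p9:
  fixes I J :: "3 list"
  assumes "set J \<subseteq> {1, 2}"
  shows "\<exists>C::real. \<forall>s0 s1 U u (H :: 3 \<Rightarrow> 3 \<Rightarrow> real^3 \<Rightarrow> real) x.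
    open U \<longrightarrow> Kreg s0 s1 \<subseteq> U \<longrightarrow> smooth_on U u \<longrightarrow>
    (\<forall>\<alpha> \<beta>. smooth_on U (H \<alpha> \<beta>)) \<longrightarrow> (\<forall>\<alpha> \<beta>. H \<alpha> \<beta> = H \<beta> \<alpha>) \<longrightarrow>
    x \<in> Kreg s0 s1 \<longrightarrow>
    (let Hu = Hunder H; p = length I + length J; k = length J in
     \<bar>pds I (boosts J (\<lambda>y. Hu y * pd 0 (pd 0 u) y)) x
        - Hu x * pd 0 (pd 0 (pds I (boosts J u))) x\<bar>
     \<le> C * (\<Sum>(I1, I2, J1, J2) \<in> {(I1, I2, J1, J2). length I1 + length I2 \<le> length I
              \<and> set J1 \<subseteq> {1, 2} \<and> set J2 \<subseteq> {1, 2} \<and> length J1 + length J2 \<le> length J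
              \<and> length I2 + length J2 \<ge> 1}.
            \<bar>pds I2 (boosts J2 Hu) x\<bar> * \<bar>pd 0 (pd 0 (pds I1 (boosts J1 u))) x\<bar>)
       + C * \<bar>Hu x\<bar> * (\<Sum>J' \<in> {J'. set J' \<subseteq> {1, 2} \<and> length J' < length J}.
            \<bar>pd 0 (pd 0 (pds I (boosts J' u))) x\<bar>)
       + C * (1 / x$0) * (\<Sum>(p1, p2, k1, k2) \<in> {(p1, p2, k1, k2). p1 + p2 \<le> p \<and> p1 < p
              \<and> k1 + k2 \<le> k}.
            znorm p2 k2 Hu x * dznorm (p1 + 1) (k1 + 1) u x)
       + C * (1 / x$0) * \<bar>Hu x\<bar> * dznorm p k u x)"
proof -
  define n where "n = length J"
  define p where "p = length I + length J"
  define KBc where "KBc = KB n p"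
  define cJ :: real where "cJ = card (Js n)"
  define C where "C = 2 ^ p * (1 + KBc) * (1 + cJ)"
  have KBn: "0 \<le> KBc" unfolding KBc_def by (rule KB_nonneg)
  have cJn: "0 \<le> cJ" unfolding cJ_def by simp
  show ?thesis
  proof (rule exI[of _ C], intro allI impI)
    fix s0 s1 U u x and H :: "3 \<Rightarrow> 3 \<Rightarrow> real^3 \<Rightarrow> real"
    assume U: "open U" and KU: "Kreg s0 s1 \<subseteq> U" and su: "smooth_on U u"
      and sH: "\<forall>\<alpha> \<beta>. smooth_on U (H \<alpha> \<beta>)" and xK: "x \<in> Kreg s0 s1"
    define V where "V = U \<inter> {y. 0 < y $ 0}"
    have V: "open V" unfolding V_def by (rule open_Int[OF U open_pos0])
    have pos: "\<forall>y\<in>V. y $ 0 > 0" by (simp add: V_def)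
    have rad0: "0 \<le> rad x" unfolding rad_def by simp
    have xt: "x $ 0 > rad x + 1" using xK by (simp add: Kreg_def)
    have t: "x $ 0 > 0" using xt rad0 by linarith
    have a1: "\<bar>x $ 1\<bar> \<le> x $ 0" using rad_ge(1)[of x] xt by linarith
    have a2: "\<bar>x $ 2\<bar> \<le> x $ 0" using rad_ge(2)[of x] xt by linarith
    have x: "x \<in> V" using xK KU t by (auto simp: V_def)
    have u: "smooth_on V u" by (rule sm_subset[OF su]) (auto simp: V_def)
    have Hs: "smooth_on V (Hunder H)"
      by (rule sm_Hunder[OF V pos]) (use sH sm_subset[of U _ V] in \<open>auto simp: V_def\<close>)
    have w: "smooth_on V (pd 0 (pd 0 u))" by (intro sm_pd u)
    define Hu where "Hu = Hunder H"
    define W where "W = map Dz I @ map Lz J"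
    obtain R where R: "splits W = ([], W) # R" "\<forall>q\<in>set R. fst q \<noteq> []" using splits_hd by blast
    have leib: "pds I (boosts J (\<lambda>y. Hu y * pd 0 (pd 0 u) y)) x
       = Hu x * pds I (boosts J (pd 0 (pd 0 u))) x + (\<Sum>(A, B)\<leftarrow>R. applyZ A Hu x * applyZ B (pd 0 (pd 0 u)) x)"
      using applyZ_leibniz[OF V Hs w, of W] x R(1)
      by (simp add: eqv_def pds_boosts_applyZ W_def Hu_def)
    define SA where "SA = {(I1::3 list, I2::3 list, J1::3 list, J2::3 list). length I1 + length I2 \<le> length I
              \<and> set J1 \<subseteq> {1, 2} \<and> set J2 \<subseteq> {1, 2} \<and> length J1 + length J2 \<le> length J
              \<and> length I2 + length J2 \<ge> (1::nat)}"
    define fA where "fA = (\<lambda>(I1, I2, J1, J2). \<bar>pds I2 (boosts J2 Hu) x\<bar> * \<bar>pd 0 (pd 0 (pds I1 (boosts J1 u))) x\<bar>)"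
    define RA where "RA = sum fA SA"
    define SC where "SC = {(p1, p2, k1, k2). p1 + p2 \<le> p \<and> p1 < p \<and> k1 + k2 \<le> n}"
    define fC where "fC = (\<lambda>(p1, p2, k1, k2). znorm p2 k2 Hu x * dznorm (p1 + 1) (k1 + 1) u x)"
    define RC where "RC = sum fC SC"
    define SQ where "SQ = (\<Sum>J' \<in> Js n. \<bar>pd 0 (pd 0 (pds I (boosts J' u))) x\<bar>)"
    define dz where "dz = dznorm p n u x"
    have finSA: "finite SA" unfolding SA_def by (rule finite_SA)
    have finSC: "finite SC" unfolding SC_def by (rule finite_SC)
    have fAn: "\<forall>z\<in>SA. 0 \<le> fA z" unfolding fA_def by auto
    have fCn: "\<forall>z\<in>SC. 0 \<le> fC z" unfolding fC_def by (auto intro!: mult_nonneg_nonneg znorm_nonneg dznorm_nonneg)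
    have RAn: "0 \<le> RA" unfolding RA_def using fAn by (simp add: sum_nonneg)
    have RCn: "0 \<le> RC" unfolding RC_def using fCn by (simp add: sum_nonneg)
    have SQn: "0 \<le> SQ" unfolding SQ_def by (simp add: sum_nonneg)
    have dzn: "0 \<le> dz" unfolding dz_def by (rule dznorm_nonneg)
    have RA_ge: "fA z \<le> RA" if "z \<in> SA" for z
      unfolding RA_def by (rule member_le_sum[OF that]) (use fAn finSA in auto)
    have RC_ge: "fC z \<le> RC" if "z \<in> SC" for z
      unfolding RC_def by (rule member_le_sum[OF that]) (use fCn finSC in auto)
    define Tb where "Tb = RA + KBc * cJ * RA + KBc * (1 / x $ 0 * RC)"
    have Tbn: "0 \<le> Tb" unfolding Tb_def using RAn RCn KBn cJn t by simp
    have termb: "\<bar>(case q of (A, B) \<Rightarrow> applyZ A Hu x * applyZ B (pd 0 (pd 0 u)) x)\<bar> \<le> Tb"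
      if q: "q \<in> set R" for q
    proof -
      obtain A B where qAB: "q = (A, B)" by (cases q)
      have AB: "(A, B) \<in> set (splits W)" using R(1) q qAB by simp
      have Ane: "A \<noteq> []" using R(2) q qAB by auto
      obtain I1 I2 J1 J2 where dec: "A = map Dz I2 @ map Lz J2" "B = map Dz I1 @ map Lz J1"
        "length I1 + length I2 = length I" "length J1 + length J2 = length J" "set J1 \<subseteq> set J" "set J2 \<subseteq> set J"
        using splits_IJ[OF AB[unfolded W_def]] by blast
      have J1s: "set J1 \<subseteq> {1,2}" and J2s: "set J2 \<subseteq> {1,2}" using dec assms by auto
      have ne: "length I2 + length J2 \<ge> 1" using Ane dec(1) by (cases I2; cases J2) auto
      define h2 where "h2 = \<bar>pds I2 (boosts J2 Hu) x\<bar>"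
      have h2n: "0 \<le> h2" unfolding h2_def by simp
      define Q0 where "Q0 = \<bar>pd 0 (pd 0 (pds I1 (boosts J1 u))) x\<bar>"
      define SQ1 where "SQ1 = (\<Sum>J'\<in>Js (length J1). \<bar>pd 0 (pd 0 (pds I1 (boosts J' u))) x\<bar>)"
      define dz1 where "dz1 = dznorm (length I1 + length J1) (length J1) u x"
      have Kc: "\<bar>pds I1 (boosts J1 (pd 0 (pd 0 u))) x - pd 0 (pd 0 (pds I1 (boosts J1 u))) x\<bar>
          \<le> KBc * SQ1 + KBc * (1 / x $ 0 * dz1)"
        unfolding KBc_def SQ1_def dz1_def
        by (rule lemmaK2[OF V u x t a1 a2 J1s]) (use dec in \<open>auto simp: n_def p_def\<close>)
      have Bb: "\<bar>applyZ B (pd 0 (pd 0 u)) x\<bar> \<le> Q0 + KBc * SQ1 + KBc * (1 / x $ 0 * dz1)"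
        using Kc unfolding dec(2) pds_boosts_applyZ[symmetric] Q0_def by linarith
      have "\<bar>applyZ A Hu x * applyZ B (pd 0 (pd 0 u)) x\<bar> = h2 * \<bar>applyZ B (pd 0 (pd 0 u)) x\<bar>"
        unfolding h2_def dec(1) pds_boosts_applyZ by (simp add: abs_mult)
      also have "\<dots> \<le> h2 * (Q0 + KBc * SQ1 + KBc * (1 / x $ 0 * dz1))"
        by (rule mult_left_mono[OF Bb h2n])
      also have "\<dots> = h2 * Q0 + KBc * (h2 * SQ1) + KBc * (1 / x $ 0) * (h2 * dz1)"
        by (simp add: algebra_simps)
      also have "\<dots> \<le> RA + KBc * (cJ * RA) + KBc * (1 / x $ 0) * RC"
      proof (intro add_mono mult_left_mono)
        show "h2 * Q0 \<le> RA"
        proof -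
          have "(I1, I2, J1, J2) \<in> SA" unfolding SA_def using dec J1s J2s ne by auto
          from RA_ge[OF this] show ?thesis unfolding fA_def h2_def Q0_def by simp
        qed
        show "h2 * SQ1 \<le> cJ * RA"
        proof -
          have "h2 * SQ1 = (\<Sum>J'\<in>Js (length J1). h2 * \<bar>pd 0 (pd 0 (pds I1 (boosts J' u))) x\<bar>)"
            unfolding SQ1_def by (simp add: sum_distrib_left)
          also have "\<dots> \<le> (\<Sum>J'\<in>Js (length J1). RA)"
          proof (rule sum_mono)
            fix J' assume "J' \<in> Js (length J1)"
            hence "(I1, I2, J', J2) \<in> SA" unfolding SA_def Js_def using dec J2s ne by auto
            from RA_ge[OF this] show "h2 * \<bar>pd 0 (pd 0 (pds I1 (boosts J' u))) x\<bar> \<le> RA"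
              unfolding fA_def h2_def by simp
          qed
          also have "\<dots> = card (Js (length J1)) * RA" by simp
          also have "\<dots> \<le> cJ * RA"
          proof (rule mult_right_mono[OF _ RAn])
            have "length J1 \<le> n" using dec by (simp add: n_def)
            thus "real (card (Js (length J1))) \<le> cJ"
              unfolding cJ_def using card_mono[OF finite_Js Js_mono] by simp
          qed
          finally show ?thesis .
        qed
        show "h2 * dz1 \<le> RC"
        proof -
          have "h2 \<le> znorm (length I2 + length J2) (length J2) Hu x"
            unfolding h2_def pds_boosts_applyZ
            by (rule znorm_ge) (use J2s Dz_Zops in \<open>auto simp: Zops_def cntL_IJ\<close>)
          moreover have "dz1 \<le> dznorm (length I1 + length J1 + 1) (length J1 + 1) u x"
            unfolding dz1_def by (rule dznorm_mono) auto
          ultimately have "h2 * dz1 \<le> znorm (length I2 + length J2) (length J2) Hu x * dznorm (length I1 + length J1 + 1) (length J1 + 1) u x"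
            by (intro mult_mono) (auto simp: h2n dz1_def intro: dznorm_nonneg znorm_nonneg)
          moreover have "(length I1 + length J1, length I2 + length J2, length J1, length J2) \<in> SC"
            unfolding SC_def using dec ne by (auto simp: p_def n_def)
          ultimately show ?thesis using RC_ge unfolding fC_def by fastforce
        qed
      qed (use KBn t in auto)
      finally show ?thesis unfolding qAB Tb_def by (simp add: algebra_simps)
    qed
    have lenR: "real (length R) \<le> 2 ^ p"
    proof -
      have "length (splits W) = 2 ^ p" by (simp add: splits_length W_def p_def)
      thus ?thesis using R(1) by simp
    qed
    have sumR: "\<bar>\<Sum>(A, B)\<leftarrow>R. applyZ A Hu x * applyZ B (pd 0 (pd 0 u)) x\<bar> \<le> 2 ^ p * Tb"
    proof -
      have "\<bar>\<Sum>(A, B)\<leftarrow>R. applyZ A Hu x * applyZ B (pd 0 (pd 0 u)) x\<bar> \<le> length R * Tb"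
        by (rule sum_list_abs_bound) (use termb in auto)
      also have "\<dots> \<le> 2 ^ p * Tb" by (rule mult_right_mono[OF lenR Tbn])
      finally show ?thesis .
    qed
    have Kmain: "\<bar>pds I (boosts J (pd 0 (pd 0 u))) x - pd 0 (pd 0 (pds I (boosts J u))) x\<bar>
          \<le> KBc * SQ + KBc * (1 / x $ 0 * dz)"
      unfolding KBc_def SQ_def dz_def n_def p_def
      by (rule lemmaK2[OF V u x t a1 a2 assms]) auto
    have main: "\<bar>Hu x * (pds I (boosts J (pd 0 (pd 0 u))) x - pd 0 (pd 0 (pds I (boosts J u))) x)\<bar>
        \<le> KBc * (\<bar>Hu x\<bar> * SQ) + KBc * (1 / x $ 0) * \<bar>Hu x\<bar> * dz"
    proof -
      have "\<bar>Hu x * (pds I (boosts J (pd 0 (pd 0 u))) x - pd 0 (pd 0 (pds I (boosts J u))) x)\<bar>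
          \<le> \<bar>Hu x\<bar> * (KBc * SQ + KBc * (1 / x $ 0 * dz))"
        unfolding abs_mult by (rule mult_left_mono[OF Kmain]) simp
      thus ?thesis by (simp add: algebra_simps)
    qed
    have LHS: "\<bar>pds I (boosts J (\<lambda>y. Hu y * pd 0 (pd 0 u) y)) x - Hu x * pd 0 (pd 0 (pds I (boosts J u))) x\<bar>
       \<le> 2 ^ p * Tb + (KBc * (\<bar>Hu x\<bar> * SQ) + KBc * (1 / x $ 0) * \<bar>Hu x\<bar> * dz)"
      using leib sumR main by (simp add: algebra_simps)
    have c1: "2 ^ p * (1 + KBc * cJ) \<le> C"
    proof -
      have "1 + KBc * cJ \<le> (1 + KBc) * (1 + cJ)" using KBn cJn by (simp add: algebra_simps)
      hence "2 ^ p * (1 + KBc * cJ) \<le> 2 ^ p * ((1 + KBc) * (1 + cJ))" by (rule mult_left_mono) simp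
      thus ?thesis unfolding C_def by (simp add: mult.assoc)
    qed
    have c2: "2 ^ p * KBc \<le> C"
    proof -
      have "KBc \<le> (1 + KBc) * (1 + cJ)" using KBn cJn by (simp add: algebra_simps)
      hence "2 ^ p * KBc \<le> 2 ^ p * ((1 + KBc) * (1 + cJ))" by (rule mult_left_mono) simp
      thus ?thesis unfolding C_def by (simp add: mult.assoc)
    qed
    have p1: "(1::real) \<le> 2 ^ p" by simp
    have c3: "KBc \<le> C"
    proof -
      have "KBc \<le> 2 ^ p * KBc" using KBn p1 by (simp add: mult_right_mono[OF p1 KBn, simplified])
      thus ?thesis using c2 by linarith
    qed
    have tn: "0 \<le> 1 / x $ 0" using t by simp
    have Hn: "0 \<le> \<bar>Hu x\<bar>" by simp
    have "2 ^ p * Tb = (2 ^ p * (1 + KBc * cJ)) * RA + (2 ^ p * KBc) * (1 / x $ 0 * RC)"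
      unfolding Tb_def by (simp add: algebra_simps)
    also have "\<dots> \<le> C * RA + C * (1 / x $ 0 * RC)"
      by (intro add_mono mult_right_mono c1 c2 RAn mult_nonneg_nonneg tn RCn)
    finally have T1: "2 ^ p * Tb \<le> C * RA + C * (1 / x $ 0 * RC)" .
    have T2: "KBc * (\<bar>Hu x\<bar> * SQ) \<le> C * (\<bar>Hu x\<bar> * SQ)"
      by (rule mult_right_mono[OF c3]) (simp add: SQn)
    have T3: "KBc * (1 / x $ 0) * \<bar>Hu x\<bar> * dz \<le> C * (1 / x $ 0) * \<bar>Hu x\<bar> * dz"
    proof -
      have "KBc * (1 / x $ 0 * \<bar>Hu x\<bar> * dz) \<le> C * (1 / x $ 0 * \<bar>Hu x\<bar> * dz)"
        by (rule mult_right_mono[OF c3]) (use tn dzn in simp)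
      thus ?thesis by (simp add: algebra_simps)
    qed
    have final: "\<bar>pds I (boosts J (\<lambda>y. Hu y * pd 0 (pd 0 u) y)) x - Hu x * pd 0 (pd 0 (pds I (boosts J u))) x\<bar>
       \<le> C * RA + C * \<bar>Hu x\<bar> * SQ + C * (1 / x $ 0) * RC + C * (1 / x $ 0) * \<bar>Hu x\<bar> * dz"
      using LHS T1 T2 T3 by (simp add: algebra_simps)
    show "let Hu = Hunder H; p = length I + length J; k = length J in
     \<bar>pds I (boosts J (\<lambda>y. Hu y * pd 0 (pd 0 u) y)) x
        - Hu x * pd 0 (pd 0 (pds I (boosts J u))) x\<bar>
     \<le> C * (\<Sum>(I1, I2, J1, J2) \<in> {(I1, I2, J1, J2). length I1 + length I2 \<le> length I
              \<and> set J1 \<subseteq> {1, 2} \<and> set J2 \<subseteq> {1, 2} \<and> length J1 + length J2 \<le> length J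
              \<and> length I2 + length J2 \<ge> 1}.
            \<bar>pds I2 (boosts J2 Hu) x\<bar> * \<bar>pd 0 (pd 0 (pds I1 (boosts J1 u))) x\<bar>)
       + C * \<bar>Hu x\<bar> * (\<Sum>J' \<in> {J'. set J' \<subseteq> {1, 2} \<and> length J' < length J}.
            \<bar>pd 0 (pd 0 (pds I (boosts J' u))) x\<bar>)
       + C * (1 / x$0) * (\<Sum>(p1, p2, k1, k2) \<in> {(p1, p2, k1, k2). p1 + p2 \<le> p \<and> p1 < p
              \<and> k1 + k2 \<le> k}.
            znorm p2 k2 Hu x * dznorm (p1 + 1) (k1 + 1) u x)
       + C * (1 / x$0) * \<bar>Hu x\<bar> * dznorm p k u x"
      using final unfolding Let_def Hu_def RA_def SA_def fA_def SQ_def Js_def RC_def SC_def fC_def dz_def n_def p_def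
      by simp
  qed
qed


end
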